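(* Let $k$ be a field of characteristic $0$ containing a primitive fifth root of unity $\zeta$. For $\underline{a}=(a_1,\ldots,a_7)\in k^7$ let $X_{\underline{a}}\subset\mathbb{P}^4$ be defined by $$a_1x_0^3 + a_2x_0x_1x_4 + a_3x_0x_2x_3 + a_4x_1^2x_3 + a_5x_1x_2^2 + a_6x_2x_4^2+a_7x_3^2x_4=0,$$ and assume $X_{\underline{a}}$ is a smooth cubic threefold and that $a_2\neq 0$ or $a_3\neq0$. Then there is a change of coordinates in $\mathbb{P}^4_{\bar k}$ such that $X_{\underline a}$ is isomorphic to $$X_{a,b}:\quad F_{a,b}:=xu^2+2yuv+zv^2+2z^2u+2x^2v+ay^3+bxyz=0$$ for some $a,b\in\bar k$, where $(u:v:x:y:z)$ are homogeneous coordinates on $\mathbb{P}^4$. Moreover, $X_{a,b}$ is smooth if and only if $$D(a,b):=a\,\Delta(a,b)\neq 0,\qquad \Delta(a,b):=512 a^2 + 27 a^3 + 48 a^2 b + 128 a b^2 + 6 a^2 b^2 + 30 a b^3+ a^2 b^3 + 8 b^4 + 2 a b^4 + b^5 .$$ The threefold $X_{a,b}$ has the automorphisms $$\alpha_X(u:v:x:y:z)=(\zeta^2u:\zeta^3v:\zeta x:y:\zeta^4z),\qquad \iota_X(u:v:x:y:z)=(v:u:z:y:x)$$ of order five and two respectively, and they generate a dihedral subgroup $D_5$ of order $10$ of $\mathrm{Aut}(X_{a,b})$. *)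

theory Defs
  imports "HOL-Algebra.Algebraic_Closure_Type" "HOL-Algebra.Algebra" "HOL-Library.Numeral_Type"
begin

text \<open>A homogeneous form of degree d in 5 variables is given by its coefficient
  function on exponent vectors (monomials) of total degree d.\<close>

type_synonym exps5 = "5 \<Rightarrow> nat"

definition mexp :: "nat \<Rightarrow> nat \<Rightarrow> nat \<Rightarrow> nat \<Rightarrow> nat \<Rightarrow> exps5" where
  "mexp e0 e1 e2 e3 e4 = (\<lambda>i. if i = 0 then e0 else if i = 1 then e1 else
       if i = 2 then e2 else if i = 3 then e3 else e4)"

definition hom_eval :: "nat \<Rightarrow> (exps5 \<Rightarrow> 'b::comm_ring_1) \<Rightarrow> (5 \<Rightarrow> 'b) \<Rightarrow> 'b" where
  "hom_eval d c p = (\<Sum>e\<in>{e::exps5. sum e UNIV = d}. c e * (\<Prod>i\<in>UNIV. p i ^ e i))"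

definition pderiv_coeffs :: "5 \<Rightarrow> (exps5 \<Rightarrow> 'b::comm_ring_1) \<Rightarrow> exps5 \<Rightarrow> 'b" where
  "pderiv_coeffs i c = (\<lambda>e. of_nat (e i + 1) * c (e(i := e i + 1)))"

definition smooth_hypersurface :: "nat \<Rightarrow> (exps5 \<Rightarrow> 'b::field) \<Rightarrow> bool" where
  "smooth_hypersurface d c \<longleftrightarrow>
     \<not> (\<exists>p::5 \<Rightarrow> 'b. (\<exists>i. p i \<noteq> 0) \<and> hom_eval d c p = 0 \<and>
          (\<forall>i. hom_eval (d - 1) (pderiv_coeffs i c) p = 0))"

definition matvec :: "(5 \<Rightarrow> 5 \<Rightarrow> 'b::comm_ring_1) \<Rightarrow> (5 \<Rightarrow> 'b) \<Rightarrow> (5 \<Rightarrow> 'b)" where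
  "matvec A p = (\<lambda>i. \<Sum>j\<in>UNIV. A i j * p j)"

definition matmul :: "(5 \<Rightarrow> 5 \<Rightarrow> 'b::comm_ring_1) \<Rightarrow> (5 \<Rightarrow> 5 \<Rightarrow> 'b) \<Rightarrow> (5 \<Rightarrow> 5 \<Rightarrow> 'b)" where
  "matmul A B = (\<lambda>i k. \<Sum>j\<in>UNIV. A i j * B j k)"

definition matid :: "5 \<Rightarrow> 5 \<Rightarrow> 'b::comm_ring_1" where
  "matid = (\<lambda>i j. if i = j then 1 else 0)"

definition mat_invertible :: "(5 \<Rightarrow> 5 \<Rightarrow> 'b::comm_ring_1) \<Rightarrow> bool" where
  "mat_invertible A \<longleftrightarrow> (\<exists>B. matmul A B = matid \<and> matmul B A = matid)"

definition proj_point :: "(5 \<Rightarrow> 'b::field) \<Rightarrow> (5 \<Rightarrow> 'b) set" where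
  "proj_point p = {(\<lambda>i. c * p i) | c. c \<noteq> 0}"

definition proj_space :: "(5 \<Rightarrow> 'b::field) set set" where
  "proj_space = {proj_point p | p. \<exists>i. p i \<noteq> 0}"

definition pmap :: "(5 \<Rightarrow> 5 \<Rightarrow> 'b::field) \<Rightarrow> (5 \<Rightarrow> 'b) set \<Rightarrow> (5 \<Rightarrow> 'b) set" where
  "pmap A = restrict (\<lambda>L. matvec A ` L) proj_space"

definition proj_zeros :: "nat \<Rightarrow> (exps5 \<Rightarrow> 'b::field) \<Rightarrow> (5 \<Rightarrow> 'b) set set" where
  "proj_zeros d c = {proj_point p | p. (\<exists>i. p i \<noteq> 0) \<and> hom_eval d c p = 0}"

definition lin_aut :: "nat \<Rightarrow> (exps5 \<Rightarrow> 'b::field) \<Rightarrow> ((5 \<Rightarrow> 'b) set \<Rightarrow> (5 \<Rightarrow> 'b) set) monoid" where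
  "lin_aut d c = \<lparr> carrier = {pmap A | A. mat_invertible A \<and> pmap A ` proj_zeros d c = proj_zeros d c},
                   monoid.mult = (\<lambda>f g. restrict (f \<circ> g) proj_space),
                   one = restrict id proj_space \<rparr>"

text \<open>Dihedral group of order 2n: (i,s) stands for r^i f^s.\<close>
definition dihedral :: "nat \<Rightarrow> (nat \<times> bool) monoid" where
  "dihedral n = \<lparr> carrier = {0..<n} \<times> UNIV,
      monoid.mult = (\<lambda>(i, s) (j, t). (if s then (i + n - j) mod n else (i + j) mod n, s \<noteq> t)),
      one = (0, False) \<rparr>"

definition F_coeffs :: "'b::comm_ring_1 \<Rightarrow> 'b \<Rightarrow> 'b \<Rightarrow> 'b \<Rightarrow> 'b \<Rightarrow> 'b \<Rightarrow> 'b \<Rightarrow> exps5 \<Rightarrow> 'b" where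
  "F_coeffs a1 a2 a3 a4 a5 a6 a7 = (\<lambda>e.
       (if e = mexp 3 0 0 0 0 then a1 else 0) + (if e = mexp 1 1 0 0 1 then a2 else 0)
     + (if e = mexp 1 0 1 1 0 then a3 else 0) + (if e = mexp 0 2 0 1 0 then a4 else 0)
     + (if e = mexp 0 1 2 0 0 then a5 else 0) + (if e = mexp 0 0 1 0 2 then a6 else 0)
     + (if e = mexp 0 0 0 2 1 then a7 else 0))"

text \<open>The cubic F_{a,b} in coordinates (u:v:x:y:z) = indices 0..4.\<close>
definition Fab_coeffs :: "'b::comm_ring_1 \<Rightarrow> 'b \<Rightarrow> exps5 \<Rightarrow> 'b" where
  "Fab_coeffs a b = (\<lambda>e.
       (if e = mexp 2 0 1 0 0 then 1 else 0) + (if e = mexp 1 1 0 1 0 then 2 else 0)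
     + (if e = mexp 0 2 0 0 1 then 1 else 0) + (if e = mexp 1 0 0 0 2 then 2 else 0)
     + (if e = mexp 0 1 2 0 0 then 2 else 0) + (if e = mexp 0 0 0 3 0 then a else 0)
     + (if e = mexp 0 0 1 1 1 then b else 0))"

definition Delta_ab :: "'b::comm_ring_1 \<Rightarrow> 'b \<Rightarrow> 'b" where
  "Delta_ab a b = 512 * a^2 + 27 * a^3 + 48 * a^2 * b + 128 * a * b^2 + 6 * a^2 * b^2
     + 30 * a * b^3 + a^2 * b^3 + 8 * b^4 + 2 * a * b^4 + b^5"

definition D_ab :: "'b::comm_ring_1 \<Rightarrow> 'b \<Rightarrow> 'b" where
  "D_ab a b = a * Delta_ab a b"

text \<open>alpha_X = diag(z^2, z^3, z, 1, z^4); iota_X(u:v:x:y:z) = (v:u:z:y:x).\<close>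
definition alpha_mat :: "'b::comm_ring_1 \<Rightarrow> 5 \<Rightarrow> 5 \<Rightarrow> 'b" where
  "alpha_mat \<zeta> = (\<lambda>i j. if i = j then
       (if i = 0 then \<zeta>^2 else if i = 1 then \<zeta>^3 else if i = 2 then \<zeta> else if i = 3 then 1 else \<zeta>^4)
     else 0)"

definition iota_perm :: "5 \<Rightarrow> 5" where
  "iota_perm i = (if i = 0 then 1 else if i = 1 then 0 else if i = 2 then 4 else if i = 3 then 3 else 2)"

definition iota_mat :: "5 \<Rightarrow> 5 \<Rightarrow> 'b::comm_ring_1" where
  "iota_mat = (\<lambda>i j. if j = iota_perm i then 1 else 0)"

end

theory Submission
  imports Defs
begin

lemma UNIV5: "(UNIV::5 set) = {0,1,2,3,4}"
proof -
  have "{0,1,2,3,4} = (UNIV::5 set)"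
    by (rule card_subset_eq) auto
  then show ?thesis by simp
qed

lemma distinct5: "(0::5) \<noteq> 1" "(0::5) \<noteq> 2" "(0::5) \<noteq> 3" "(0::5) \<noteq> 4"
  "(1::5) \<noteq> 2" "(1::5) \<noteq> 3" "(1::5) \<noteq> 4" "(2::5) \<noteq> 3" "(2::5) \<noteq> 4" "(3::5) \<noteq> 4"
  by simp_all

lemma sum5: "(\<Sum>i\<in>(UNIV::5 set). f i) = f 0 + (f 1 + (f 2 + (f 3 + f 4)))"
  unfolding UNIV5 using distinct5 by (simp add: sum.insert)
lemma prod5: "(\<Prod>i\<in>(UNIV::5 set). f i) = f 0 * (f 1 * (f 2 * (f 3 * f 4)))"
  unfolding UNIV5 using distinct5 by (simp add: prod.insert)

lemma finite_exps: "finite {e::exps5. sum e UNIV = d}"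
proof -
  have "{e::exps5. sum e UNIV = d} \<subseteq> PiE UNIV (\<lambda>_. {..d})"
  proof
    fix e :: exps5 assume "e \<in> {e. sum e UNIV = d}"
    then have "e i \<le> d" for i
      using member_le_sum[of i UNIV e] by auto
    then show "e \<in> PiE UNIV (\<lambda>_. {..d})" by (auto simp: PiE_def extensional_def)
  qed
  moreover have "finite (PiE (UNIV::5 set) (\<lambda>_. {..d}))" by (rule finite_PiE) auto
  ultimately show ?thesis by (rule finite_subset)
qed

lemma hom_eval_add: "hom_eval d (\<lambda>e. f e + g e) p = hom_eval d f p + hom_eval d g p"
  by (simp add: hom_eval_def distrib_right sum.distrib)

lemma hom_eval_mono: "hom_eval d (\<lambda>e. if e = m then c else 0) p =
   (if sum m UNIV = d then c * (\<Prod>i\<in>UNIV. p i ^ m i) else 0)"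
proof -
  have "hom_eval d (\<lambda>e. if e = m then c else 0) p =
     (\<Sum>e\<in>{e::exps5. sum e UNIV = d}. if e = m then c * (\<Prod>i\<in>UNIV. p i ^ m i) else 0)"
    unfolding hom_eval_def by (rule sum.cong) auto
  also have "\<dots> = (if sum m UNIV = d then c * (\<Prod>i\<in>UNIV. p i ^ m i) else 0)"
    using finite_exps[of d] by (simp add: sum.delta')
  finally show ?thesis .
qed

lemma pderiv_add: "pderiv_coeffs i (\<lambda>e. f e + g e) = (\<lambda>e. pderiv_coeffs i f e + pderiv_coeffs i g e)"
  by (simp add: pderiv_coeffs_def distrib_left)

lemma hom_eval_pd_mono: "hom_eval d (pderiv_coeffs i (\<lambda>e. if e = m then c else 0)) p =
   (if 0 < m i \<and> sum m UNIV = Suc d then of_nat (m i) * c * (\<Prod>j\<in>UNIV. p j ^ (m(i := m i - 1)) j) else 0)"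
proof (cases "0 < m i")
  case True
  have eq: "e(i := e i + 1) = m \<longleftrightarrow> e = m(i := m i - 1)" for e
    using True by (auto simp: fun_eq_iff)
  have "pderiv_coeffs i (\<lambda>e. if e = m then c else 0) = (\<lambda>e. if e = m(i := m i - 1) then of_nat (m i) * c else 0)"
  proof (rule ext)
    fix e
    show "pderiv_coeffs i (\<lambda>e. if e = m then c else 0) e = (if e = m(i := m i - 1) then of_nat (m i) * c else 0)"
      unfolding pderiv_coeffs_def eq
    proof (cases "e = m(i := m i - 1)")
      case True
      then have "e i + 1 = m i" using \<open>0 < m i\<close> by simp
      then show "of_nat (e i + 1) * (if e = m(i := m i - 1) then c else 0) = (if e = m(i := m i - 1) then of_nat (m i) * c else 0)"
        using True by simp
    qed simp
  qed
  moreover have "sum (m(i := m i - 1)) UNIV = sum m UNIV - 1"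
  proof -
    have r1: "sum (m(i := m i - 1)) UNIV = (m i - 1) + sum (m(i := m i - 1)) (UNIV - {i})"
      by (subst sum.remove[of UNIV i]) auto
    have r2: "sum m UNIV = m i + sum m (UNIV - {i})"
      by (subst sum.remove[of UNIV i]) auto
    have r3: "sum (m(i := m i - 1)) (UNIV - {i}) = sum m (UNIV - {i})"
      by (rule sum.cong) auto
    have "sum (m(i := m i - 1)) UNIV + 1 = sum m UNIV"
      using True r1 r2 r3 by simp
    then show ?thesis by simp
  qed
  moreover have "m i \<le> sum m UNIV" by (rule member_le_sum) auto
  ultimately have "sum (m(i := m i - 1)) UNIV = d \<longleftrightarrow> sum m UNIV = Suc d"
    using True by linarith
  then show ?thesis using True \<open>pderiv_coeffs i _ = _\<close> by (simp add: hom_eval_mono)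
next
  case False
  have "pderiv_coeffs i (\<lambda>e. if e = m then c else 0) = (\<lambda>e. 0)"
  proof (rule ext)
    fix e
    have "e(i := e i + 1) \<noteq> m" using False by (metis fun_upd_same gr0I add_eq_0_iff_both_eq_0 one_neq_zero)
    then show "pderiv_coeffs i (\<lambda>e. if e = m then c else 0) e = 0"
      by (simp add: pderiv_coeffs_def)
  qed
  then show ?thesis using False by (simp add: hom_eval_def)
qed

definition fab :: "'b::comm_ring_1 \<Rightarrow> 'b \<Rightarrow> 'b \<Rightarrow> 'b \<Rightarrow> 'b \<Rightarrow> 'b \<Rightarrow> 'b \<Rightarrow> 'b" where
 "fab a b u v x y z = x*u^2 + 2*y*u*v + z*v^2 + 2*z^2*u + 2*x^2*v + a*y^3 + b*x*y*z"

lemma mexp_simps: "mexp e0 e1 e2 e3 e4 0 = e0" "mexp e0 e1 e2 e3 e4 1 = e1" "mexp e0 e1 e2 e3 e4 2 = e2"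
  "mexp e0 e1 e2 e3 e4 3 = e3" "mexp e0 e1 e2 e3 e4 4 = e4"
  using distinct5 by (simp_all add: mexp_def)

lemma hom_Fab: "hom_eval 3 (Fab_coeffs a b) p = fab a b (p 0) (p 1) (p 2) (p 3) (p 4)"
  unfolding Fab_coeffs_def hom_eval_add hom_eval_mono
  by (simp add: sum5 prod5 mexp_simps fab_def algebra_simps power2_eq_square power3_eq_cube)
lemma hom_Fab_d:
  "hom_eval (3-1) (pderiv_coeffs 0 (Fab_coeffs a b)) p = 2*(p 2*p 0 + p 3*p 1 + p 4^2)"
  "hom_eval (3-1) (pderiv_coeffs 1 (Fab_coeffs a b)) p = 2*(p 3*p 0 + p 4*p 1 + p 2^2)"
  "hom_eval (3-1) (pderiv_coeffs 2 (Fab_coeffs a b)) p = p 0^2 + 4*p 2*p 1 + b*p 3*p 4"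
  "hom_eval (3-1) (pderiv_coeffs 3 (Fab_coeffs a b)) p = 2*p 0*p 1 + 3*a*p 3^2 + b*p 2*p 4"
  "hom_eval (3-1) (pderiv_coeffs 4 (Fab_coeffs a b)) p = p 1^2 + 4*p 4*p 0 + b*p 2*p 3"
  unfolding Fab_coeffs_def pderiv_add hom_eval_add hom_eval_pd_mono
  by (simp_all add: sum5 prod5 mexp_simps algebra_simps power2_eq_square power3_eq_cube distinct5 distinct5[symmetric])

lemma symprod:
  fixes k0 k1 k2 t1 t2 t3 :: "'c::comm_ring_1"
  shows "9*((k2*t1^2+k1*t1+k0)*(k2*t2^2+k1*t2+k0)*(k2*t3^2+k1*t3+k0)) =
   9*k0^3 + 3*k0^2*k1*(3*(t1+t2+t3)) + k0^2*k2*(3*(t1+t2+t3))^2 - 6*k0^2*k2*(3*(t1*t2+t1*t3+t2*t3)) + 3*k0*k1^2*(3*(t1*t2+t1*t3+t2*t3)) + k0*k1*k2*(3*(t1+t2+t3))*(3*(t1*t2+t1*t3+t2*t3)) - 9*k0*k1*k2*(3*(t1*t2*t3)) - 2*k0*k2^2*(3*(t1+t2+t3))*(3*(t1*t2*t3)) + k0*k2^2*(3*(t1*t2+t1*t3+t2*t3))^2 + 3*k1^3*(3*(t1*t2*t3)) + k1^2*k2*(3*(t1+t2+t3))*(3*(t1*t2*t3)) + k1*k2^2*(3*(t1*t2+t1*t3+t2*t3))*(3*(t1*t2*t3)) + k2^3*(3*(t1*t2*t3))^2"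
  by (simp add: algebra_simps eval_nat_numeral)

lemma final_id:
  fixes a b :: "'c::comm_ring_1"
  shows "(let k2 = 27*a+b^3+6*b^2-3*b+32; k1 = 54*a+2*b^3+11*b^2-10*b; k0 = 27*a+b^3+4*b^2-8*b;
    E1 = b - 4; E2 = -2*b; E3 = b in
   9*k0^3 + 3*k0^2*k1*E1 + k0^2*k2*E1^2 - 6*k0^2*k2*E2 + 3*k0*k1^2*E2 + k0*k1*k2*E1*E2 - 9*k0*k1*k2*E3 - 2*k0*k2^2*E1*E3 + k0*k2^2*E2^2 + 3*k1^3*E3 + k1^2*k2*E1*E3 + k1*k2^2*E2*E3 + k2^3*E3^2)
   = 729 * Delta_ab a b"
  unfolding Let_def Delta_ab_def by (simp add: algebra_simps eval_nat_numeral)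

lemma red_id:
  fixes a b t :: "'c::comm_ring_1"
  shows "27*((t+1)^2*a+t^4*(t+2)) = (27*a+b^3+6*b^2-3*b+32)*t^2 + (54*a+2*b^3+11*b^2-10*b)*t + (27*a+b^3+4*b^2-8*b)
     + (b^2 + 3*b*t + 4*b + 9*t^2 + 6*t - 8) * (3*t^3+(4-b)*t^2-2*b*t-b)"
  by (simp add: algebra_simps eval_nat_numeral)

definition Pb :: "'c::comm_ring_1 \<Rightarrow> 'c \<Rightarrow> 'c" where "Pb b t = 3*t^3+(4-b)*t^2-2*b*t-b"
definition ff :: "'c::comm_ring_1 \<Rightarrow> 'c \<Rightarrow> 'c" where "ff a t = (t+1)^2*a+t^4*(t+2)"

lemma cubic_root:
  fixes c3 c2 c1 c0 :: "'c::alg_closed_field"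
  assumes "c3 \<noteq> 0" shows "\<exists>x. c3*x^3 + c2*x^2 + c1*x + c0 = 0"
proof -
  define f where "f = (\<lambda>k::nat. if k = 0 then c0 else if k = 1 then c1 else if k = 2 then c2 else c3)"
  have "\<exists>x. (\<Sum>k\<le>3. f k * x ^ k) = 0"
    by (rule alg_closed) (use assms in \<open>auto simp: f_def\<close>)
  then obtain x where "(\<Sum>k\<le>3. f k * x ^ k) = 0" by blast
  moreover have "(\<Sum>k\<le>3. f k * x ^ k) = c3*x^3 + c2*x^2 + c1*x + c0"
    by (simp add: f_def eval_nat_numeral atMost_Suc algebra_simps)
  ultimately show ?thesis by metis
qed

lemma quad_root:
  fixes c2 c1 c0 :: "'c::alg_closed_field"
  assumes "c2 \<noteq> 0" shows "\<exists>x. c2*x^2 + c1*x + c0 = 0"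
proof -
  define f where "f = (\<lambda>k::nat. if k = 0 then c0 else if k = 1 then c1 else c2)"
  have "\<exists>x. (\<Sum>k\<le>2. f k * x ^ k) = 0"
    by (rule alg_closed) (use assms in \<open>auto simp: f_def\<close>)
  then obtain x where "(\<Sum>k\<le>2. f k * x ^ k) = 0" by blast
  moreover have "(\<Sum>k\<le>2. f k * x ^ k) = c2*x^2 + c1*x + c0"
    by (simp add: f_def eval_nat_numeral atMost_Suc algebra_simps)
  ultimately show ?thesis by metis
qed

lemma split_cubic:
  fixes b t1 :: "'c::{alg_closed_field,field_char_0}"
  assumes "Pb b t1 = 0"
  shows "\<exists>t2 t3. 3*(t1+t2+t3) = b - 4 \<and> 3*(t1*t2+t1*t3+t2*t3) = -2*b \<and> 3*(t1*t2*t3) = b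
     \<and> Pb b t2 = 0 \<and> Pb b t3 = 0"
proof -
  define \<beta> where "\<beta> = 3*t1+4-b"
  define \<gamma> where "\<gamma> = 3*t1^2+(4-b)*t1-2*b"
  obtain t2 where t2: "3*t2^2 + \<beta>*t2 + \<gamma> = 0" using quad_root[of "3::'c"] by auto
  define t3 where "t3 = -\<beta>/3 - t2"
  have t3: "3*t3^2 + \<beta>*t3 + \<gamma> = 0"
  proof -
    have "3*t3^2 + \<beta>*t3 + \<gamma> = 3*t2^2 + \<beta>*t2 + \<gamma>"
      unfolding t3_def by (simp add: field_simps power2_eq_square)
    then show ?thesis using t2 by simp
  qed
  have fac: "Pb b T = (T - t1)*(3*T^2 + \<beta>*T + \<gamma>) + Pb b t1" for T
    unfolding Pb_def \<beta>_def \<gamma>_def by (simp add: algebra_simps eval_nat_numeral)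
  have s1: "3*(t1+t2+t3) = b - 4" unfolding t3_def \<beta>_def by (simp add: field_simps)
  have p23: "3*(t2*t3) = \<gamma>"
  proof -
    have "3*(t2*t3) = -(3*t2^2 + \<beta>*t2)" unfolding t3_def by (simp add: field_simps power2_eq_square)
    then show ?thesis using t2 by (simp add: algebra_simps) (metis add.commute add_diff_cancel_left' diff_0 minus_add_cancel)
  qed
  have s2: "3*(t1*t2+t1*t3+t2*t3) = -2*b"
  proof -
    have h: "3*(t2+t3) = -\<beta>" unfolding t3_def by (simp add: field_simps)
    have "3*(t1*t2+t1*t3+t2*t3) = t1*(3*(t2+t3)) + 3*(t2*t3)" by (simp add: algebra_simps)
    also have "\<dots> = t1*(-\<beta>) + \<gamma>" by (simp only: h p23)
    also have "\<dots> = -2*b" unfolding \<beta>_def \<gamma>_def by (simp add: algebra_simps power2_eq_square)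
    finally show ?thesis .
  qed
  have s3: "3*(t1*t2*t3) = b"
  proof -
    have "3*(t1*t2*t3) = t1*\<gamma>" using p23 by (simp add: algebra_simps)
    also have "\<dots> = Pb b t1 + b" unfolding \<gamma>_def Pb_def by (simp add: algebra_simps eval_nat_numeral)
    finally show ?thesis using assms by simp
  qed
  show ?thesis
    by (rule exI[of _ t2], rule exI[of _ t3]) (use s1 s2 s3 fac[of t2] fac[of t3] t2 t3 assms in simp)
qed

lemma prod_ff:
  fixes a b t1 t2 t3 :: "'c::comm_ring_1"
  assumes "3*(t1+t2+t3) = b - 4" "3*(t1*t2+t1*t3+t2*t3) = -2*b" "3*(t1*t2*t3) = b"
    "Pb b t1 = 0" "Pb b t2 = 0" "Pb b t3 = 0"
  shows "9*((27*ff a t1)*(27*ff a t2)*(27*ff a t3)) = 729 * Delta_ab a b"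
proof -
  define K2 where "K2 = 27*a+b^3+6*b^2-3*b+32"
  define K1 where "K1 = 54*a+2*b^3+11*b^2-10*b"
  define K0 where "K0 = 27*a+b^3+4*b^2-8*b"
  have r: "27*ff a t = K2*t^2 + K1*t + K0"
    if "Pb b t = 0" for t
    using red_id[of t a b] that unfolding ff_def Pb_def K2_def K1_def K0_def by simp
  have "9*((27*ff a t1)*(27*ff a t2)*(27*ff a t3)) = 9*((K2*t1^2+K1*t1+K0)*(K2*t2^2+K1*t2+K0)*(K2*t3^2+K1*t3+K0))"
    by (simp only: r assms(4-6))
  also have "\<dots> = 9*K0^3 + 3*K0^2*K1*(3*(t1+t2+t3)) + K0^2*K2*(3*(t1+t2+t3))^2 - 6*K0^2*K2*(3*(t1*t2+t1*t3+t2*t3)) + 3*K0*K1^2*(3*(t1*t2+t1*t3+t2*t3)) + K0*K1*K2*(3*(t1+t2+t3))*(3*(t1*t2+t1*t3+t2*t3)) - 9*K0*K1*K2*(3*(t1*t2*t3)) - 2*K0*K2^2*(3*(t1+t2+t3))*(3*(t1*t2*t3)) + K0*K2^2*(3*(t1*t2+t1*t3+t2*t3))^2 + 3*K1^3*(3*(t1*t2*t3)) + K1^2*K2*(3*(t1+t2+t3))*(3*(t1*t2*t3)) + K1*K2^2*(3*(t1*t2+t1*t3+t2*t3))*(3*(t1*t2*t3)) + K2^3*(3*(t1*t2*t3))^2"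
    by (rule symprod)
  also have "\<dots> = 9*K0^3 + 3*K0^2*K1*(b-4) + K0^2*K2*(b-4)^2 - 6*K0^2*K2*(-2*b) + 3*K0*K1^2*(-2*b) + K0*K1*K2*(b-4)*(-2*b) - 9*K0*K1*K2*b - 2*K0*K2^2*(b-4)*b + K0*K2^2*(-2*b)^2 + 3*K1^3*b + K1^2*K2*(b-4)*b + K1*K2^2*(-2*b)*b + K2^3*b^2"
    by (simp only: assms(1-3))
  also have "\<dots> = 729 * Delta_ab a b"
    using final_id[of a b] unfolding Let_def K2_def K1_def K0_def by simp
  finally show ?thesis .
qed

lemma delta_iff:
  fixes a b :: "'c::{alg_closed_field,field_char_0}"
  shows "Delta_ab a b = 0 \<longleftrightarrow> (\<exists>t. Pb b t = 0 \<and> ff a t = 0)"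
proof
  assume D: "Delta_ab a b = 0"
  obtain t1 where t1: "Pb b t1 = 0"
    using cubic_root[of "3::'c" "4-b" "-2*b" "-b"] unfolding Pb_def by (auto simp: algebra_simps)
  then obtain t2 t3 where v: "3*(t1+t2+t3) = b - 4" "3*(t1*t2+t1*t3+t2*t3) = -2*b" "3*(t1*t2*t3) = b"
     "Pb b t2 = 0" "Pb b t3 = 0" using split_cubic by blast
  have "9*((27*ff a t1)*(27*ff a t2)*(27*ff a t3)) = 0" using prod_ff[OF v(1-3) t1 v(4,5), of a] D by simp
  then have "ff a t1 = 0 \<or> ff a t2 = 0 \<or> ff a t3 = 0" by simp
  then show "\<exists>t. Pb b t = 0 \<and> ff a t = 0" using t1 v(4,5) by blast
next
  assume "\<exists>t. Pb b t = 0 \<and> ff a t = 0"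
  then obtain t1 where t1: "Pb b t1 = 0" "ff a t1 = 0" by blast
  then obtain t2 t3 where v: "3*(t1+t2+t3) = b - 4" "3*(t1*t2+t1*t3+t2*t3) = -2*b" "3*(t1*t2*t3) = b"
     "Pb b t2 = 0" "Pb b t3 = 0" using split_cubic by blast
  show "Delta_ab a b = 0" using prod_ff[OF v(1-3) t1(1) v(4,5), of a] t1(2) by simp
qed

definition Es :: "'c::comm_ring_1 \<Rightarrow> 'c \<Rightarrow> 'c \<Rightarrow> 'c \<Rightarrow> 'c \<Rightarrow> 'c \<Rightarrow> 'c \<Rightarrow> bool" where
  "Es a b u v x y z \<longleftrightarrow> x*u + y*v + z^2 = 0 \<and> y*u + z*v + x^2 = 0 \<and> u^2 + 4*x*v + b*y*z = 0
      \<and> 2*u*v + 3*a*y^2 + b*x*z = 0 \<and> v^2 + 4*z*u + b*x*y = 0"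

lemma Es_y0:
  fixes u v x z :: "'c::field_char_0"
  assumes "Es a b u v x 0 z" shows "u = 0 \<and> v = 0 \<and> x = 0 \<and> z = 0"
proof -
  have E0: "x*u + z^2 = 0" and E1: "z*v + x^2 = 0" and E2: "u^2 + 4*x*v = 0" and E4: "v^2 + 4*z*u = 0"
    using assms by (auto simp: Es_def)
  have x0: "x = 0"
  proof (rule ccontr)
    assume "x \<noteq> 0"
    have i1: "z^5 - 4*x^5 = z*x^2*(u^2+4*x*v) - z*(x*u+z^2)*(x*u-z^2) - 4*x^3*(z*v+x^2)"
      by (simp add: algebra_simps eval_nat_numeral)
    have i2: "x^5 - 4*z^5 = x*z^2*(v^2+4*z*u) - x*(z*v+x^2)*(z*v-x^2) - 4*z^3*(x*u+z^2)"
      by (simp add: algebra_simps eval_nat_numeral)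
    have "z^5 = 4*x^5" using i1 E0 E1 E2 by simp
    moreover have "x^5 = 4*z^5" using i2 E0 E1 E4 by simp
    ultimately have "15*x^5 = 0" by simp
    then show False using \<open>x \<noteq> 0\<close> by simp
  qed
  then have "z = 0" using E0 by simp
  then show ?thesis using x0 E2 E4 by simp
qed

lemma Es_sym:
  fixes s :: "'c::comm_ring_1"
  assumes s: "s^5 = 1" and E: "Es a b u v x y z"
  shows "Es a b (s^2*u) (s^3*v) (s*x) y (s^4*z)"
proof -
  have "s^8 = s^5 * s^3" "s^7 = s^5*s^2" "s^6 = s^5*s" by (simp_all add: eval_nat_numeral algebra_simps)
  then have p8: "s^8 = s^3" and p7: "s^7 = s^2" and p6: "s^6 = s" using s by simp_all
  have "(s*x)*(s^2*u) + y*(s^3*v) + (s^4*z)^2 = s^3*(x*u) + s^3*(y*v) + s^8*z^2"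
    by (simp add: algebra_simps eval_nat_numeral)
  also have "\<dots> = s^3*(x*u + y*v + z^2)" using p8 by (simp add: algebra_simps)
  finally have 1: "(s*x)*(s^2*u) + y*(s^3*v) + (s^4*z)^2 = s^3*(x*u + y*v + z^2)" .
  have "y*(s^2*u) + (s^4*z)*(s^3*v) + (s*x)^2 = s^2*(y*u) + s^7*(z*v) + s^2*x^2"
    by (simp add: algebra_simps eval_nat_numeral)
  also have "\<dots> = s^2*(y*u + z*v + x^2)" using p7 by (simp add: algebra_simps)
  finally have 2: "y*(s^2*u) + (s^4*z)*(s^3*v) + (s*x)^2 = s^2*(y*u + z*v + x^2)" .
  have 3: "(s^2*u)^2 + 4*(s*x)*(s^3*v) + b*y*(s^4*z) = s^4*(u^2 + 4*x*v + b*y*z)"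
    by (simp add: algebra_simps eval_nat_numeral)
  have "2*(s^2*u)*(s^3*v) + 3*a*y^2 + b*(s*x)*(s^4*z) = s^5*(2*u*v) + 3*a*y^2 + s^5*(b*x*z)"
    by (simp add: algebra_simps eval_nat_numeral)
  also have "\<dots> = 2*u*v + 3*a*y^2 + b*x*z" using s by (simp add: algebra_simps)
  finally have 4: "2*(s^2*u)*(s^3*v) + 3*a*y^2 + b*(s*x)*(s^4*z) = 2*u*v + 3*a*y^2 + b*x*z" .
  have "(s^3*v)^2 + 4*(s^4*z)*(s^2*u) + b*(s*x)*y = s^6*v^2 + s^6*(4*z*u) + s*(b*x*y)"
    by (simp add: algebra_simps eval_nat_numeral)
  also have "\<dots> = s*(v^2 + 4*z*u + b*x*y)" using p6 by (simp add: algebra_simps)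
  finally have 5: "(s^3*v)^2 + 4*(s^4*z)*(s^2*u) + b*(s*x)*y = s*(v^2 + 4*z*u + b*x*y)" .
  show ?thesis using 1 2 3 4 5 E unfolding Es_def by simp
qed

lemma Es_diag:
  fixes a b u v t :: "'c::{alg_closed_field,field_char_0}"
  assumes E: "Es a b u v t 1 t" and t0: "t \<noteq> 0"
  shows "Delta_ab a b = 0"
proof -
  have E0: "t*u + v + t^2 = 0" and E1: "u + t*v + t^2 = 0" and E2: "u^2 + 4*t*v + b*t = 0"
    and E3: "2*u*v + 3*a + b*t*t = 0" and E4: "v^2 + 4*t*u + b*t = 0"
    using E by (auto simp: Es_def)
  have uv: "u = v"
  proof (cases "t = 1")
    case True
    have "(u - v)*(u + v - 4) = 0"
    proof -
      have "(u - v)*(u + v - 4) = (u^2 + 4*t*v + b*t) - (v^2 + 4*t*u + b*t)"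
        using True by (simp add: algebra_simps power2_eq_square)
      then show ?thesis using E2 E4 by simp
    qed
    moreover have "1 + (u + v) = 0" using E0 True by (simp add: algebra_simps)
    moreover have "u + v - 4 = (1 + (u+v)) - 5" by (simp add: algebra_simps)
    ultimately show ?thesis by auto
  next
    case False
    have "(t - 1)*(u - v) = (t*u + v + t^2) - (u + t*v + t^2)" by (simp add: algebra_simps)
    then have "(t - 1)*(u - v) = 0" using E0 E1 by simp
    then show ?thesis using False by simp
  qed
  have "u*(1+t) + t^2 = 0" using E1 uv by (simp add: algebra_simps)
  then have u1: "u*(1+t) = - (t^2)" by (simp add: eq_neg_iff_add_eq_0)
  have tm1: "1 + t \<noteq> 0"
  proof
    assume "1 + t = 0"
    then have "t^2 = 0" using u1 by simp
    then show False using t0 by simp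
  qed
  have Pb0: "Pb b t = 0"
  proof -
    have "t*(Pb b t) = -((u*(1+t))^2 + 4*t*(u*(1+t))*(1+t) + b*t*(1+t)^2) + (t^4 - t^4)"
      using u1 unfolding Pb_def by (simp add: algebra_simps eval_nat_numeral)
    also have "(u*(1+t))^2 + 4*t*(u*(1+t))*(1+t) + b*t*(1+t)^2 = (u^2 + 4*t*v + b*t)*(1+t)^2"
      using uv by (simp add: algebra_simps eval_nat_numeral)
    finally have "t*(Pb b t) = 0" using E2 by simp
    then show ?thesis using t0 by simp
  qed
  have bt: "b*(1+t)^2 = 3*t^3 + 4*t^2" using Pb0 unfolding Pb_def by (simp add: algebra_simps eval_nat_numeral)
  have ff0: "ff a t = 0"
  proof -
    have "3*ff a t = 2*(u*(1+t))^2 + 3*a*(1+t)^2 + t^2*(b*(1+t)^2)"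
      using u1 bt unfolding ff_def by (simp add: algebra_simps eval_nat_numeral)
    also have "\<dots> = (2*u*v + 3*a + b*t*t)*(1+t)^2"
      using uv by (simp add: algebra_simps eval_nat_numeral)
    finally show ?thesis using E3 by simp
  qed
  show ?thesis using delta_iff Pb0 ff0 by blast
qed

lemma Es_y1:
  fixes a b u v x z :: "'c::{alg_closed_field,field_char_0}"
  assumes E: "Es a b u v x 1 z"
  shows "a = 0 \<or> Delta_ab a b = 0"
proof -
  have E0: "x*u + v + z^2 = 0" and E1: "u + z*v + x^2 = 0" and E2: "u^2 + 4*x*v + b*z = 0"
    and E3: "2*u*v + 3*a + b*x*z = 0" and E4: "v^2 + 4*z*u + b*x = 0"
    using E by (auto simp: Es_def)
  define d where "d = 1 - x*z"
  have ud: "u*d = z^3 - x^2"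
  proof -
    have "u*d - (z^3 - x^2) = (u + z*v + x^2) - z*(x*u + v + z^2)" unfolding d_def by (simp add: algebra_simps eval_nat_numeral)
    then show ?thesis using E0 E1 by simp
  qed
  have vd: "v*d = x^3 - z^2"
  proof -
    have "v*d - (x^3 - z^2) = (x*u + v + z^2) - x*(u + z*v + x^2)" unfolding d_def by (simp add: algebra_simps eval_nat_numeral)
    then show ?thesis using E0 E1 by simp
  qed
  have G: "x*u^2 + 4*x^2*v - z*v^2 - 4*z^2*u = 0"
  proof -
    have "x*u^2 + 4*x^2*v - z*v^2 - 4*z^2*u = x*(u^2 + 4*x*v + b*z) - z*(v^2 + 4*z*u + b*x)"
      by (simp add: algebra_simps eval_nat_numeral)
    then show ?thesis using E2 E4 by simp
  qed
  have x5: "x^5 = z^5"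
  proof (cases "d = 0")
    case True
    then have "z^3 = x^2" "x^3 = z^2" using ud vd by simp_all
    then have "x^5 = z^5" by (metis power_add numeral_plus_numeral semiring_norm(2) semiring_norm(5)
        semiring_norm(7) mult.commute num.simps)
    then show ?thesis .
  next
    case False
    have "d^2*(x*u^2 + 4*x^2*v - z*v^2 - 4*z^2*u) = x*(u*d)^2 + 4*x^2*d*(v*d) - z*(v*d)^2 - 4*z^2*d*(u*d)"
      by (simp add: algebra_simps eval_nat_numeral)
    also have "\<dots> = x*(z^3 - x^2)^2 + 4*x^2*d*(x^3 - z^2) - z*(x^3 - z^2)^2 - 4*z^2*d*(z^3 - x^2)"
      by (simp only: ud vd)
    also have "\<dots> = 5*(x^5 - z^5)*d" unfolding d_def by (simp add: algebra_simps eval_nat_numeral)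
    finally have "5*(x^5 - z^5)*d = 0" using G by simp
    then show ?thesis using False by simp
  qed
  show ?thesis
  proof (cases "x = 0")
    case True
    then have z0: "z = 0" using x5 by simp
    then have "u = 0" using E1 True by simp
    then have "v = 0" using E0 True z0 by simp
    then have "a = 0" using E3 \<open>u = 0\<close> True by simp
    then show ?thesis by simp
  next
    case False
    define w where "w = z/x"
    have zw: "z = w*x" using False unfolding w_def by simp
    have w5: "w^5 = 1" using x5 False unfolding zw by (simp add: power_mult_distrib)
    define s where "s = w^3"
    have s5: "s^5 = 1" unfolding s_def using w5 by (metis power_mult power_one mult.commute)
    have E': "Es a b (s^2*u) (s^3*v) (s*x) 1 (s^4*z)" by (rule Es_sym[OF s5 E])
    have "s^4*z = s*x"
    proof -
      have "s^4*z = w^13*x" unfolding s_def zw by (simp add: algebra_simps flip: power_mult power_Suc)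
      also have "w^13 = w^3 * (w^5)^2" by (simp flip: power_mult power_add)
      finally show ?thesis using w5 unfolding s_def by simp
    qed
    then have E'': "Es a b (s^2*u) (s^3*v) (s*x) 1 (s*x)" using E' by simp
    have "s \<noteq> 0" using s5 by (metis zero_neq_one zero_power zero_less_numeral)
    then have "s*x \<noteq> 0" using False by simp
    then show ?thesis using Es_diag[OF E''] by simp
  qed
qed

lemma euler_fab: "3 * fab a b u v x y z = u*(2*(x*u + y*v + z^2)) + v*(2*(y*u + z*v + x^2)) + x*(u^2 + 4*x*v + b*y*z)
   + y*(2*u*v + 3*a*y^2 + b*x*z) + z*(v^2 + 4*z*u + b*x*y)"
  unfolding fab_def by (simp add: algebra_simps eval_nat_numeral)

lemma Es_scale:
  fixes y :: "'c::field"
  assumes "y \<noteq> 0" "Es a b u v x y z" shows "Es a b (u/y) (v/y) (x/y) 1 (z/y)"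
  using assms unfolding Es_def by (simp add: field_simps power2_eq_square)

lemma ex_nonzero5: "(\<exists>i. p i \<noteq> 0) \<longleftrightarrow> \<not> (p 0 = 0 \<and> p 1 = 0 \<and> p 2 = 0 \<and> p 3 = 0 \<and> p (4::5) = 0)"
  using UNIV5 by (metis UNIV_I empty_iff insert_iff)

lemma all5: "(\<forall>i::5. P i) \<longleftrightarrow> P 0 \<and> P 1 \<and> P 2 \<and> P 3 \<and> P 4"
  using UNIV5 by (metis UNIV_I empty_iff insert_iff)

lemma sing_Fab_iff:
  fixes a b :: "'c::field_char_0"
  shows "(\<exists>p::5 \<Rightarrow> 'c. (\<exists>i. p i \<noteq> 0) \<and> hom_eval 3 (Fab_coeffs a b) p = 0 \<and>
          (\<forall>i. hom_eval (3 - 1) (pderiv_coeffs i (Fab_coeffs a b)) p = 0))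
    \<longleftrightarrow> (\<exists>u v x y z. \<not> (u = 0 \<and> v = 0 \<and> x = 0 \<and> y = 0 \<and> z = 0) \<and> Es a b u v x y z)"
proof
  assume "\<exists>p::5 \<Rightarrow> 'c. (\<exists>i. p i \<noteq> 0) \<and> hom_eval 3 (Fab_coeffs a b) p = 0 \<and>
          (\<forall>i. hom_eval (3 - 1) (pderiv_coeffs i (Fab_coeffs a b)) p = 0)"
  then obtain p :: "5 \<Rightarrow> 'c" where p: "\<exists>i. p i \<noteq> 0" "\<forall>i. hom_eval (3 - 1) (pderiv_coeffs i (Fab_coeffs a b)) p = 0"
    by blast
  have h: "p 2*p 0 + p 3*p 1 + p 4^2 = 0 \<and> p 3*p 0 + p 4*p 1 + p 2^2 = 0 \<and> p 0^2 + 4*p 2*p 1 + b*p 3*p 4 = 0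
     \<and> 2*p 0*p 1 + 3*a*p 3^2 + b*p 2*p 4 = 0 \<and> p 1^2 + 4*p 4*p 0 + b*p 2*p 3 = 0"
    using p(2) unfolding all5 hom_Fab_d mult_eq_0_iff by simp
  have "Es a b (p 0) (p 1) (p 2) (p 3) (p 4)"
    using h unfolding Es_def by (simp add: algebra_simps)
  then show "\<exists>u v x y z. \<not> (u = 0 \<and> v = 0 \<and> x = 0 \<and> y = 0 \<and> z = 0) \<and> Es a b u v x y z"
    using p(1) unfolding ex_nonzero5 by blast
next
  assume "\<exists>u v x y z. \<not> (u = 0 \<and> v = 0 \<and> x = 0 \<and> y = 0 \<and> z = 0) \<and> Es a b u v x y z"
  then obtain u v x y z where nz: "\<not> (u = 0 \<and> v = 0 \<and> x = 0 \<and> y = 0 \<and> z = 0)" and E: "Es a b u v x y z" by blast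
  define p :: "5 \<Rightarrow> 'c" where "p = (\<lambda>i. if i = 0 then u else if i = 1 then v else if i = 2 then x else if i = 3 then y else z)"
  have pv: "p 0 = u" "p 1 = v" "p 2 = x" "p 3 = y" "p 4 = z" unfolding p_def using distinct5 by simp_all
  have "3 * fab a b u v x y z = 0" using E unfolding euler_fab Es_def by simp
  then have f0: "fab a b u v x y z = 0" by simp
  show "\<exists>p::5 \<Rightarrow> 'c. (\<exists>i. p i \<noteq> 0) \<and> hom_eval 3 (Fab_coeffs a b) p = 0 \<and>
          (\<forall>i. hom_eval (3 - 1) (pderiv_coeffs i (Fab_coeffs a b)) p = 0)"
    apply (rule exI[of _ p])
    using nz E f0 unfolding all5 hom_Fab_d hom_Fab ex_nonzero5 pv Es_def by (simp add: algebra_simps)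
qed

lemma smooth_Fab_iff:
  fixes a b :: "'c::{alg_closed_field,field_char_0}"
  shows "smooth_hypersurface 3 (Fab_coeffs a b) \<longleftrightarrow> D_ab a b \<noteq> 0"
proof -
  have "(\<exists>u v x y z. \<not> (u = 0 \<and> v = 0 \<and> x = 0 \<and> y = 0 \<and> z = 0) \<and> Es a b u v x y z) \<longleftrightarrow> D_ab a b = 0"
  proof
    assume "\<exists>u v x y z. \<not> (u = 0 \<and> v = 0 \<and> x = 0 \<and> y = 0 \<and> z = 0) \<and> Es a b u v x y z"
    then obtain u v x y z where nz: "\<not> (u = 0 \<and> v = 0 \<and> x = 0 \<and> y = 0 \<and> z = 0)" and E: "Es a b u v x y z" by blast
    have "y \<noteq> 0"
    proof
      assume "y = 0" then show False using Es_y0[of a b u v x z] E nz by simp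
    qed
    then have "Es a b (u/y) (v/y) (x/y) 1 (z/y)" using Es_scale E by blast
    then have "a = 0 \<or> Delta_ab a b = 0" by (rule Es_y1)
    then show "D_ab a b = 0" unfolding D_ab_def by auto
  next
    assume "D_ab a b = 0"
    then have "a = 0 \<or> Delta_ab a b = 0" unfolding D_ab_def by simp
    then show "\<exists>u v x y z. \<not> (u = 0 \<and> v = 0 \<and> x = 0 \<and> y = 0 \<and> z = 0) \<and> Es a b u v x y z"
    proof
      assume "a = 0"
      then have "Es a b 0 0 0 1 0" unfolding Es_def by simp
      then show ?thesis by (intro exI[of _ 0] exI[of _ 1]) auto
    next
      assume "Delta_ab a b = 0"
      then obtain t where t: "Pb b t = 0" "ff a t = 0" using delta_iff by blast
      have s0: "1 + t \<noteq> 0"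
      proof
        assume "1 + t = 0" then have "t = -1" by (simp add: eq_neg_iff_add_eq_0 add.commute)
        then show False using t(1) unfolding Pb_def by simp
      qed
      have i0: "(t*(1+t))*(-(t^2)) + (1+t)*(-(t^2)) + (t*(1+t))^2 = 0"
        by (simp add: algebra_simps eval_nat_numeral)
      have i2: "(-(t^2))^2 + 4*(t*(1+t))*(-(t^2)) + b*(1+t)*(t*(1+t)) = -(t * Pb b t)"
        unfolding Pb_def by (simp add: algebra_simps eval_nat_numeral)
      have i3: "2*(-(t^2))*(-(t^2)) + 3*a*(1+t)^2 + b*(t*(1+t))*(t*(1+t)) = 3*ff a t - t^2 * Pb b t"
        unfolding Pb_def ff_def by (simp add: algebra_simps eval_nat_numeral)
      have i4: "(-(t^2))^2 + 4*(t*(1+t))*(-(t^2)) + b*(t*(1+t))*(1+t) = -(t * Pb b t)"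
        unfolding Pb_def by (simp add: algebra_simps eval_nat_numeral)
      have "Es a b (-(t^2)) (-(t^2)) (t*(1+t)) (1+t) (t*(1+t))"
        unfolding Es_def using i0 i2 i3 i4 t by (simp add: algebra_simps)
      then show ?thesis using s0 by blast
    qed
  qed
  then show ?thesis unfolding smooth_hypersurface_def sing_Fab_iff by blast
qed

definition mono_mat :: "(5 \<Rightarrow> 5) \<Rightarrow> (5 \<Rightarrow> 'b::comm_ring_1) \<Rightarrow> 5 \<Rightarrow> 5 \<Rightarrow> 'b" where
  "mono_mat \<sigma> d = (\<lambda>i j. if j = \<sigma> i then d i else 0)"

lemma mult_if_0: "(if P then a else 0) * (b::'b::comm_ring_1) = (if P then a*b else 0)" by simp

lemma matvec_mono: "matvec (mono_mat \<sigma> d) p = (\<lambda>i. d i * p (\<sigma> i))"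
  unfolding matvec_def mono_mat_def by (simp add: mult_if_0 sum.delta)

lemma matmul_mono: "matmul (mono_mat \<sigma> d) (mono_mat \<tau> e) = mono_mat (\<tau> \<circ> \<sigma>) (\<lambda>i. d i * e (\<sigma> i))"
  unfolding matmul_def mono_mat_def by (rule ext, rule ext) (simp add: mult_if_0 sum.delta)

lemma matid_mono: "matid = mono_mat id (\<lambda>_. 1)"
  unfolding matid_def mono_mat_def by (auto simp: fun_eq_iff)

lemma mono_mat_cong: "(\<And>i. \<sigma> i = \<tau> i) \<Longrightarrow> (\<And>i. d i = e i) \<Longrightarrow> mono_mat \<sigma> d = mono_mat \<tau> e"
  unfolding mono_mat_def by (auto simp: fun_eq_iff)

lemma mono_invertible:
  fixes d :: "5 \<Rightarrow> 'b::field"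
  assumes "\<And>i. \<sigma> (\<tau> i) = i" "\<And>i. \<tau> (\<sigma> i) = i" "\<And>i. d i \<noteq> 0"
  shows "mat_invertible (mono_mat \<sigma> d)"
  unfolding mat_invertible_def
proof (intro exI conjI)
  show "matmul (mono_mat \<sigma> d) (mono_mat \<tau> (\<lambda>i. inverse (d (\<tau> i)))) = matid"
    unfolding matmul_mono matid_mono by (rule mono_mat_cong) (simp_all add: assms)
  show "matmul (mono_mat \<tau> (\<lambda>i. inverse (d (\<tau> i)))) (mono_mat \<sigma> d) = matid"
    unfolding matmul_mono matid_mono by (rule mono_mat_cong) (simp_all add: assms)
qed

lemma hom_F: "hom_eval 3 (F_coeffs a1 a2 a3 a4 a5 a6 a7) p =
   a1*p 0^3 + a2*p 0*p 1*p 4 + a3*p 0*p 2*p 3 + a4*p 1^2*p 3 + a5*p 1*p 2^2 + a6*p 2*p 4^2 + a7*p 3^2*p 4"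
  unfolding F_coeffs_def hom_eval_add hom_eval_mono
  by (simp add: sum5 prod5 mexp_simps algebra_simps power2_eq_square power3_eq_cube)

lemma hom_F_d:
  "hom_eval (3-1) (pderiv_coeffs 0 (F_coeffs a1 a2 a3 a4 a5 a6 a7)) p = 3*a1*p 0^2 + a2*p 1*p 4 + a3*p 2*p 3"
  "hom_eval (3-1) (pderiv_coeffs 1 (F_coeffs a1 a2 a3 a4 a5 a6 a7)) p = a2*p 0*p 4 + 2*a4*p 1*p 3 + a5*p 2^2"
  "hom_eval (3-1) (pderiv_coeffs 2 (F_coeffs a1 a2 a3 a4 a5 a6 a7)) p = a3*p 0*p 3 + 2*a5*p 1*p 2 + a6*p 4^2"
  "hom_eval (3-1) (pderiv_coeffs 3 (F_coeffs a1 a2 a3 a4 a5 a6 a7)) p = a3*p 0*p 2 + a4*p 1^2 + 2*a7*p 3*p 4"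
  "hom_eval (3-1) (pderiv_coeffs 4 (F_coeffs a1 a2 a3 a4 a5 a6 a7)) p = a2*p 0*p 1 + 2*a6*p 2*p 4 + a7*p 3^2"
  unfolding F_coeffs_def pderiv_add hom_eval_add hom_eval_pd_mono
  by (simp_all add: sum5 prod5 mexp_simps algebra_simps power2_eq_square power3_eq_cube distinct5 distinct5[symmetric])

definition ee :: "5 \<Rightarrow> 5 \<Rightarrow> 'b::comm_ring_1" where "ee k = (\<lambda>i. if i = k then 1 else 0)"

lemma ee_simps: "ee 0 0 = 1" "ee 0 1 = 0" "ee 0 2 = 0" "ee 0 3 = 0" "ee 0 4 = 0"
  "ee 1 0 = 0" "ee 1 1 = 1" "ee 1 2 = 0" "ee 1 3 = 0" "ee 1 4 = 0"
  "ee 2 0 = 0" "ee 2 1 = 0" "ee 2 2 = 1" "ee 2 3 = 0" "ee 2 4 = 0"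
  "ee 3 0 = 0" "ee 3 1 = 0" "ee 3 2 = 0" "ee 3 3 = 1" "ee 3 4 = 0"
  "ee 4 0 = 0" "ee 4 1 = 0" "ee 4 2 = 0" "ee 4 3 = 0" "ee 4 4 = 1"
  unfolding ee_def using distinct5 by auto

lemma F_nonzero:
  fixes a1 a2 a3 a4 a5 a6 a7 :: "'b::field_char_0"
  assumes "smooth_hypersurface 3 (F_coeffs a1 a2 a3 a4 a5 a6 a7)"
  shows "a1 \<noteq> 0 \<and> a4 \<noteq> 0 \<and> a5 \<noteq> 0 \<and> a6 \<noteq> 0 \<and> a7 \<noteq> 0"
proof -
  have ne: "\<exists>i. ee k i \<noteq> (0::'b)" for k unfolding ee_def by auto
  have sing: "hom_eval 3 (F_coeffs a1 a2 a3 a4 a5 a6 a7) (ee k) = 0 \<Longrightarrow>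
      (\<forall>i. hom_eval (3 - 1) (pderiv_coeffs i (F_coeffs a1 a2 a3 a4 a5 a6 a7)) (ee k) = 0) \<Longrightarrow> False" for k
    using assms ne[of k] unfolding smooth_hypersurface_def by blast
  show ?thesis
  proof (intro conjI notI)
    assume "a1 = 0" then show False using sing[of 0] unfolding all5 hom_F hom_F_d by (simp add: ee_simps)
  next
    assume "a4 = 0" then show False using sing[of 1] unfolding all5 hom_F hom_F_d by (simp add: ee_simps)
  next
    assume "a5 = 0" then show False using sing[of 2] unfolding all5 hom_F hom_F_d by (simp add: ee_simps)
  next
    assume "a6 = 0" then show False using sing[of 4] unfolding all5 hom_F hom_F_d by (simp add: ee_simps)
  next
    assume "a7 = 0" then show False using sing[of 3] unfolding all5 hom_F hom_F_d by (simp add: ee_simps)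
  qed
qed

lemma scale_solve:
  fixes q1 q2 q3 q4 :: "'c::{alg_closed_field,field_char_0}"
  assumes nz: "q1 \<noteq> 0" "q2 \<noteq> 0" "q3 \<noteq> 0" "q4 \<noteq> 0"
  shows "\<exists>su sv sx sz. su \<noteq> 0 \<and> sv \<noteq> 0 \<and> sx \<noteq> 0 \<and> sz \<noteq> 0 \<and>
     q1*sx*su^2 = 1 \<and> q2*sv^2*sz = 1 \<and> q3*su*sz^2 = 2 \<and> q4*sx^2*sv = 2"
proof -
  obtain w where w: "w^15 = q4*q3^4/(32*q1^2*q2^8)" using nth_root_exists[of 15] by auto
  have w0: "w \<noteq> 0" using w nz by (auto simp: power_0_left)
  define sv where "sv = w"
  define sz where "sz = 1/(q2*w^2)"
  define su where "su = 2*q2^2*w^4/q3"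
  define sx where "sx = q3^2/(4*q1*q2^4*w^8)"
  have 1: "q1*sx*su^2 = 1" unfolding sx_def su_def using nz w0 by (simp add: field_simps eval_nat_numeral)
  have 2: "q2*sv^2*sz = 1" unfolding sv_def sz_def using nz w0 by (simp add: field_simps eval_nat_numeral)
  have 3: "q3*su*sz^2 = 2" unfolding su_def sz_def using nz w0 by (simp add: field_simps eval_nat_numeral)
  have "q4*sx^2*sv = q4*q3^4/(16*q1^2*q2^8*w^15)" unfolding sx_def sv_def using nz w0
    by (simp add: field_simps eval_nat_numeral)
  also have "\<dots> = 2" unfolding w using nz by (simp add: field_simps eval_nat_numeral)
  finally have 4: "q4*sx^2*sv = 2" .
  have "su \<noteq> 0 \<and> sv \<noteq> 0 \<and> sx \<noteq> 0 \<and> sz \<noteq> 0" unfolding su_def sv_def sx_def sz_def using nz w0 by simp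
  then show ?thesis using 1 2 3 4 by blast
qed

lemma partA_gen:
  fixes a1 a2 a3 a4 a5 a6 a7 sy sx su sv sz :: "'c::field"
  assumes "a5*sx*su^2 = 1" "a3*sy*su*sv = 2" "a7*sv^2*sz = 1" "a6*su*sz^2 = 2" "a4*sx^2*sv = 2"
  shows "hom_eval 3 (F_coeffs a1 a2 a3 a4 a5 a6 a7)
      (matvec (mono_mat (\<lambda>i. if i=0 then 3 else if i=1 then 2 else if i=2 then 0 else if i=3 then 1 else 4)
        (\<lambda>i. if i=0 then sy else if i=1 then sx else if i=2 then su else if i=3 then sv else sz)) p)
    = hom_eval 3 (Fab_coeffs (a1*sy^3) (a2*sy*sx*sz)) p"
proof -
  have "hom_eval 3 (F_coeffs a1 a2 a3 a4 a5 a6 a7)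
      (matvec (mono_mat (\<lambda>i. if i=0 then 3 else if i=1 then 2 else if i=2 then 0 else if i=3 then 1 else 4)
        (\<lambda>i. if i=0 then sy else if i=1 then sx else if i=2 then su else if i=3 then sv else sz)) p)
     = (a1*sy^3)*p 3^3 + (a2*sy*sx*sz)*(p 2*p 3*p 4) + (a3*sy*su*sv)*(p 3*p 0*p 1) + (a4*sx^2*sv)*(p 2^2*p 1)
       + (a5*sx*su^2)*(p 2*p 0^2) + (a6*su*sz^2)*(p 0*p 4^2) + (a7*sv^2*sz)*(p 1^2*p 4)"
    unfolding hom_F matvec_mono using distinct5 by (simp add: algebra_simps eval_nat_numeral)
  also have "\<dots> = (a1*sy^3)*p 3^3 + (a2*sy*sx*sz)*(p 2*p 3*p 4) + 2*(p 3*p 0*p 1) + 2*(p 2^2*p 1)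
       + (p 2*p 0^2) + 2*(p 0*p 4^2) + (p 1^2*p 4)" using assms by simp
  also have "\<dots> = hom_eval 3 (Fab_coeffs (a1*sy^3) (a2*sy*sx*sz)) p"
    unfolding hom_Fab fab_def by (simp add: algebra_simps eval_nat_numeral)
  finally show ?thesis .
qed

lemma partA_gen2:
  fixes a1 a2 a4 a5 a6 a7 sy sx su sv sz :: "'c::field"
  assumes "a4*su^2*sx = 1" "a2*sy*su*sv = 2" "a6*sz*sv^2 = 1" "a5*su*sz^2 = 2" "a7*sx^2*sv = 2"
  shows "hom_eval 3 (F_coeffs a1 a2 0 a4 a5 a6 a7)
      (matvec (mono_mat (\<lambda>i. if i=0 then 3 else if i=1 then 0 else if i=2 then 4 else if i=3 then 2 else 1)
        (\<lambda>i. if i=0 then sy else if i=1 then su else if i=2 then sz else if i=3 then sx else sv)) p)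
    = hom_eval 3 (Fab_coeffs (a1*sy^3) 0) p"
proof -
  have "hom_eval 3 (F_coeffs a1 a2 0 a4 a5 a6 a7)
      (matvec (mono_mat (\<lambda>i. if i=0 then 3 else if i=1 then 0 else if i=2 then 4 else if i=3 then 2 else 1)
        (\<lambda>i. if i=0 then sy else if i=1 then su else if i=2 then sz else if i=3 then sx else sv)) p)
     = (a1*sy^3)*p 3^3 + (a2*sy*su*sv)*(p 3*p 0*p 1) + (a4*su^2*sx)*(p 0^2*p 2) + (a5*su*sz^2)*(p 0*p 4^2)
       + (a6*sz*sv^2)*(p 4*p 1^2) + (a7*sx^2*sv)*(p 2^2*p 1)"
    unfolding hom_F matvec_mono using distinct5 by (simp add: algebra_simps eval_nat_numeral)
  also have "\<dots> = (a1*sy^3)*p 3^3 + 2*(p 3*p 0*p 1) + (p 0^2*p 2) + 2*(p 0*p 4^2)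
       + (p 4*p 1^2) + 2*(p 2^2*p 1)" using assms by simp
  also have "\<dots> = hom_eval 3 (Fab_coeffs (a1*sy^3) 0) p"
    unfolding hom_Fab fab_def by (simp add: algebra_simps eval_nat_numeral)
  finally show ?thesis .
qed

lemma all5_fix: "P 0 \<Longrightarrow> P 1 \<Longrightarrow> P 2 \<Longrightarrow> P 3 \<Longrightarrow> P 4 \<Longrightarrow> P (i::5)"
  using all5[of P] by blast

lemma partA:
  fixes a1 a2 a3 a4 a5 a6 a7 :: "'c::{alg_closed_field,field_char_0}"
  assumes sm: "smooth_hypersurface 3 (F_coeffs a1 a2 a3 a4 a5 a6 a7)" and a23: "a2 \<noteq> 0 \<or> a3 \<noteq> 0"
  shows "\<exists>(A :: 5 \<Rightarrow> 5 \<Rightarrow> 'c) a b. mat_invertible A \<and>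
            (\<forall>p. hom_eval 3 (F_coeffs a1 a2 a3 a4 a5 a6 a7) (matvec A p) = 0
                 \<longleftrightarrow> hom_eval 3 (Fab_coeffs a b) p = 0)"
proof -
  have nz: "a1 \<noteq> 0" "a4 \<noteq> 0" "a5 \<noteq> 0" "a6 \<noteq> 0" "a7 \<noteq> 0" using F_nonzero[OF sm] by auto
  show ?thesis
  proof (cases "a3 = 0")
    case False
    obtain su sv sx sz where s: "su \<noteq> 0" "sv \<noteq> 0" "sx \<noteq> 0" "sz \<noteq> 0"
      "a5*sx*su^2 = 1" "a7*sv^2*sz = 1" "a6*su*sz^2 = 2" "a4*sx^2*sv = 2"
      using scale_solve[of a5 a7 a6 a4] nz by blast
    define sy where "sy = 2/(a3*su*sv)"
    have sy: "a3*sy*su*sv = 2" "sy \<noteq> 0" unfolding sy_def using s False by simp_all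
    define A where "A = mono_mat (\<lambda>i::5. if i=0 then 3 else if i=1 then 2 else if i=2 then 0 else if i=3 then 1 else 4)
        (\<lambda>i. if i=0 then sy else if i=1 then sx else if i=2 then su else if i=3 then sv else sz)"
    have inv: "mat_invertible A" unfolding A_def
      by (rule mono_invertible[where \<tau>="\<lambda>i::5. if i=0 then 2 else if i=1 then 3 else if i=2 then 1 else if i=3 then 0 else 4"])
         (rule all5_fix; use distinct5 s sy in simp)+
    have eq: "hom_eval 3 (F_coeffs a1 a2 a3 a4 a5 a6 a7) (matvec A p) = hom_eval 3 (Fab_coeffs (a1*sy^3) (a2*sy*sx*sz)) p" for p
      unfolding A_def by (rule partA_gen[OF s(5) sy(1) s(6) s(7) s(8)])
    show ?thesis
      by (rule exI[of _ A], rule exI[of _ "a1*sy^3"], rule exI[of _ "a2*sy*sx*sz"]) (use inv eq in simp)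
  next
    case True
    then have a2: "a2 \<noteq> 0" using a23 by simp
    obtain su sv sx sz where s: "su \<noteq> 0" "sv \<noteq> 0" "sx \<noteq> 0" "sz \<noteq> 0"
      "a4*sx*su^2 = 1" "a6*sv^2*sz = 1" "a5*su*sz^2 = 2" "a7*sx^2*sv = 2"
      using scale_solve[of a4 a6 a5 a7] nz by blast
    define sy where "sy = 2/(a2*su*sv)"
    have sy: "a2*sy*su*sv = 2" "sy \<noteq> 0" unfolding sy_def using s a2 by simp_all
    have s': "a4*su^2*sx = 1" "a6*sz*sv^2 = 1" using s by (simp_all add: mult_ac)
    define A where "A = mono_mat (\<lambda>i::5. if i=0 then 3 else if i=1 then 0 else if i=2 then 4 else if i=3 then 2 else 1)
        (\<lambda>i. if i=0 then sy else if i=1 then su else if i=2 then sz else if i=3 then sx else sv)"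
    have inv: "mat_invertible A" unfolding A_def
      by (rule mono_invertible[where \<tau>="\<lambda>i::5. if i=0 then 1 else if i=1 then 4 else if i=2 then 3 else if i=3 then 0 else 2"])
         (rule all5_fix; use distinct5 s sy in simp)+
    have eq: "hom_eval 3 (F_coeffs a1 a2 a3 a4 a5 a6 a7) (matvec A p) = hom_eval 3 (Fab_coeffs (a1*sy^3) 0) p" for p
      unfolding A_def True by (rule partA_gen2[OF s'(1) sy(1) s'(2) s(7) s(8)])
    show ?thesis
      by (rule exI[of _ A], rule exI[of _ "a1*sy^3"], rule exI[of _ 0]) (use inv eq in simp)
  qed
qed

lemma matvec_scale: "matvec A (\<lambda>i. c * p i) = (\<lambda>i. c * matvec A p i)"
  unfolding matvec_def by (simp add: sum_distrib_left algebra_simps)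

lemma matvec_matmul: "matvec (matmul A B) p = matvec A (matvec B p)"
proof (rule ext)
  fix i
  have "matvec (matmul A B) p i = (\<Sum>j\<in>UNIV. \<Sum>k\<in>UNIV. A i k * B k j * p j)"
    unfolding matvec_def matmul_def by (simp add: sum_distrib_right)
  also have "\<dots> = (\<Sum>k\<in>UNIV. \<Sum>j\<in>UNIV. A i k * B k j * p j)" by (rule sum.swap)
  also have "\<dots> = matvec A (matvec B p) i"
    unfolding matvec_def by (simp add: sum_distrib_left mult.assoc)
  finally show "matvec (matmul A B) p i = matvec A (matvec B p) i" .
qed

lemma matmul_assoc: "matmul (matmul A B) C = matmul A (matmul B C)"
proof (rule ext, rule ext)
  fix i l
  have "matmul (matmul A B) C i l = (\<Sum>j\<in>UNIV. \<Sum>k\<in>UNIV. A i k * B k j * C j l)"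
    unfolding matmul_def by (simp add: sum_distrib_right)
  also have "\<dots> = (\<Sum>k\<in>UNIV. \<Sum>j\<in>UNIV. A i k * B k j * C j l)" by (rule sum.swap)
  also have "\<dots> = matmul A (matmul B C) i l"
    unfolding matmul_def by (simp add: sum_distrib_left mult.assoc)
  finally show "matmul (matmul A B) C i l = matmul A (matmul B C) i l" .
qed

lemma matvec_matid: "matvec matid p = p"
  unfolding matvec_def matid_def by (simp add: mult_if_0 sum.delta')

lemma if_0_mult: "(a::'b::comm_ring_1) * (if P then b else 0) = (if P then a*b else 0)" by simp

lemma matmul_matid: "matmul matid A = A" "matmul A matid = A"
  unfolding matmul_def matid_def by (simp_all add: mult_if_0 if_0_mult sum.delta' sum.delta)

lemma matvec_matid': "matvec matid = (\<lambda>p. p)"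
  by (rule ext) (rule matvec_matid)

lemma inv_nonzero:
  assumes "matmul B A = matid" "\<exists>i. p i \<noteq> 0" shows "\<exists>i. matvec A p i \<noteq> 0"
proof (rule ccontr)
  assume "\<not> (\<exists>i. matvec A p i \<noteq> 0)"
  then have "matvec A p = (\<lambda>i. 0 * p i)" by auto
  then have "matvec B (matvec A p) = (\<lambda>i. 0)" using matvec_scale[of B 0 p] by simp
  then have "p = (\<lambda>i. 0)" using matvec_matmul[of B A p] assms(1) by (simp add: matvec_matid)
  then show False using assms(2) by simp
qed

lemma image_pp: "matvec A ` proj_point p = proj_point (matvec A p)"
proof
  show "matvec A ` proj_point p \<subseteq> proj_point (matvec A p)"
    unfolding proj_point_def by (auto simp: matvec_scale)
  show "proj_point (matvec A p) \<subseteq> matvec A ` proj_point p"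
  proof
    fix q assume "q \<in> proj_point (matvec A p)"
    then obtain c where c: "c \<noteq> 0" "q = (\<lambda>i. c * matvec A p i)" unfolding proj_point_def by blast
    then have "q = matvec A (\<lambda>i. c * p i)" by (simp add: matvec_scale)
    moreover have "(\<lambda>i. c * p i) \<in> proj_point p" unfolding proj_point_def using c(1) by blast
    ultimately show "q \<in> matvec A ` proj_point p" by blast
  qed
qed

lemma pp_in: "\<exists>i. p i \<noteq> 0 \<Longrightarrow> proj_point p \<in> proj_space"
  unfolding proj_space_def by blast

lemma pmap_pp: "\<exists>i. p i \<noteq> 0 \<Longrightarrow> pmap A (proj_point p) = proj_point (matvec A p)"
  unfolding pmap_def by (simp add: pp_in image_pp)

lemma pmap_out: "L \<notin> proj_space \<Longrightarrow> pmap A L = undefined"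
  unfolding pmap_def by simp

lemma proj_spaceE: "L \<in> proj_space \<Longrightarrow> (\<And>p. \<exists>i. p i \<noteq> 0 \<Longrightarrow> L = proj_point p \<Longrightarrow> thesis) \<Longrightarrow> thesis"
  unfolding proj_space_def by blast

lemma pmap_in:
  assumes "mat_invertible A" "L \<in> proj_space" shows "pmap A L \<in> proj_space"
proof -
  obtain B where B: "matmul B A = matid" using assms(1) unfolding mat_invertible_def by blast
  obtain p where p: "\<exists>i. p i \<noteq> 0" "L = proj_point p" using assms(2) by (rule proj_spaceE)
  show ?thesis using p inv_nonzero[OF B p(1)] by (simp add: pmap_pp pp_in)
qed

lemma pmap_comp:
  assumes "mat_invertible B"
  shows "restrict (pmap A \<circ> pmap B) proj_space = pmap (matmul A B)"
proof (rule ext)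
  fix L
  show "restrict (pmap A \<circ> pmap B) proj_space L = pmap (matmul A B) L"
  proof (cases "L \<in> proj_space")
    case True
    obtain B' where B': "matmul B' B = matid" using assms(1) unfolding mat_invertible_def by blast
    obtain p where p: "\<exists>i. p i \<noteq> 0" "L = proj_point p" using True by (rule proj_spaceE)
    show ?thesis using p True inv_nonzero[OF B' p(1)] by (simp add: pmap_pp matvec_matmul)
  next
    case False then show ?thesis by (simp add: pmap_out)
  qed
qed

lemma pmap_id: "pmap matid = restrict id proj_space"
  unfolding pmap_def matvec_matid' image_ident by (simp add: id_def)

lemma pp_eq:
  fixes p q :: "5 \<Rightarrow> 'b::field"
  assumes "proj_point p = proj_point q" shows "\<exists>c. c \<noteq> 0 \<and> p = (\<lambda>i. c * q i)"
proof -
  have "p \<in> proj_point p" unfolding proj_point_def by (rule CollectI, rule exI[of _ 1]) simp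
  then show ?thesis using assms unfolding proj_point_def by auto
qed

lemma pmap_inverse:
  assumes "matmul B A = matid" "mat_invertible A" "L \<in> proj_space"
  shows "pmap B (pmap A L) = L"
proof -
  have "restrict (pmap B \<circ> pmap A) proj_space L = pmap matid L" using pmap_comp[OF assms(2), of B] assms(1) by simp
  then show ?thesis using assms(3) by (simp add: pmap_id)
qed

lemma zeros_sub: "proj_zeros d c \<subseteq> proj_space"
  unfolding proj_zeros_def proj_space_def by blast

lemma invertible_mult: "mat_invertible A \<Longrightarrow> mat_invertible B \<Longrightarrow> mat_invertible (matmul A B)"
  unfolding mat_invertible_def
proof (elim exE conjE)
  fix A' B' assume a: "matmul A A' = matid" "matmul A' A = matid" and b: "matmul B B' = matid" "matmul B' B = matid"
  show "\<exists>C. matmul (matmul A B) C = matid \<and> matmul C (matmul A B) = matid"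
  proof (intro exI conjI)
    have "matmul (matmul A B) (matmul B' A') = matmul A (matmul (matmul B B') A')"
      by (simp only: matmul_assoc)
    then show "matmul (matmul A B) (matmul B' A') = matid" by (simp only: b matmul_matid a)
    have "matmul (matmul B' A') (matmul A B) = matmul B' (matmul (matmul A' A) B)"
      by (simp only: matmul_assoc)
    then show "matmul (matmul B' A') (matmul A B) = matid" by (simp only: a matmul_matid b)
  qed
qed

lemma carrier_lin_aut: "carrier (lin_aut d c) = {pmap A | A. mat_invertible A \<and> pmap A ` proj_zeros d c = proj_zeros d c}"
  by (simp add: lin_aut_def)
lemma mult_lin_aut: "x \<otimes>\<^bsub>lin_aut d c\<^esub> y = restrict (x \<circ> y) proj_space"
  by (simp add: lin_aut_def)
lemma one_lin_aut: "\<one>\<^bsub>lin_aut d c\<^esub> = restrict id proj_space"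
  by (simp add: lin_aut_def)

lemma lin_aut_group: "group (lin_aut d (c :: exps5 \<Rightarrow> 'b::field))"
proof (rule groupI)
  fix x y assume x: "x \<in> carrier (lin_aut d c)" and y: "y \<in> carrier (lin_aut d c)"
  obtain A where A: "x = pmap A" "mat_invertible A" "pmap A ` proj_zeros d c = proj_zeros d c"
    using x unfolding carrier_lin_aut by blast
  obtain B where B: "y = pmap B" "mat_invertible B" "pmap B ` proj_zeros d c = proj_zeros d c"
    using y unfolding carrier_lin_aut by blast
  have "x \<otimes>\<^bsub>lin_aut d c\<^esub> y = pmap (matmul A B)" unfolding mult_lin_aut A B by (rule pmap_comp[OF B(2)])
  moreover have "pmap (matmul A B) ` proj_zeros d c = proj_zeros d c"
  proof -
    have "pmap (matmul A B) ` proj_zeros d c = restrict (pmap A \<circ> pmap B) proj_space ` proj_zeros d c"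
      by (simp add: pmap_comp[OF B(2)])
    also have "\<dots> = pmap A ` pmap B ` proj_zeros d c"
      using zeros_sub[of d c] by (force simp: image_iff)
    finally show ?thesis using A(3) B(3) by simp
  qed
  ultimately show "x \<otimes>\<^bsub>lin_aut d c\<^esub> y \<in> carrier (lin_aut d c)"
    unfolding carrier_lin_aut using invertible_mult[OF A(2) B(2)] by blast
next
  have "mat_invertible (matid :: 5 \<Rightarrow> 5 \<Rightarrow> 'b)" unfolding mat_invertible_def using matmul_matid by blast
  moreover have "pmap matid ` proj_zeros d c = proj_zeros d c" unfolding pmap_id using zeros_sub[of d c] by force
  ultimately show "\<one>\<^bsub>lin_aut d c\<^esub> \<in> carrier (lin_aut d c)" unfolding carrier_lin_aut one_lin_aut pmap_id[symmetric] by blast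
next
  fix x y z assume x: "x \<in> carrier (lin_aut d c)" and y: "y \<in> carrier (lin_aut d c)" and z: "z \<in> carrier (lin_aut d c)"
  obtain C where C: "z = pmap C" "mat_invertible C" using z unfolding carrier_lin_aut by blast
  obtain B where B: "y = pmap B" "mat_invertible B" using y unfolding carrier_lin_aut by blast
  show "x \<otimes>\<^bsub>lin_aut d c\<^esub> y \<otimes>\<^bsub>lin_aut d c\<^esub> z = x \<otimes>\<^bsub>lin_aut d c\<^esub> (y \<otimes>\<^bsub>lin_aut d c\<^esub> z)"
    unfolding mult_lin_aut
  proof (rule ext)
    fix L show "restrict (restrict (x \<circ> y) proj_space \<circ> z) proj_space L = restrict (x \<circ> restrict (y \<circ> z) proj_space) proj_space L"
      using pmap_in[OF C(2), of L] pmap_in[OF B(2)] C(1) B(1) by auto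
  qed
next
  fix x assume x: "x \<in> carrier (lin_aut d c)"
  obtain A where A: "x = pmap A" "mat_invertible A" using x unfolding carrier_lin_aut by blast
  show "\<one>\<^bsub>lin_aut d c\<^esub> \<otimes>\<^bsub>lin_aut d c\<^esub> x = x"
    unfolding mult_lin_aut one_lin_aut
  proof (rule ext)
    fix L show "restrict (restrict id proj_space \<circ> x) proj_space L = x L"
      using pmap_in[OF A(2), of L] A(1) pmap_out[of L A] by auto
  qed
next
  fix x assume x: "x \<in> carrier (lin_aut d c)"
  obtain A where A: "x = pmap A" "mat_invertible A" "pmap A ` proj_zeros d c = proj_zeros d c"
    using x unfolding carrier_lin_aut by blast
  obtain B where B: "matmul A B = matid" "matmul B A = matid" using A(2) unfolding mat_invertible_def by blast
  have Binv: "mat_invertible B" unfolding mat_invertible_def using B by blast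
  have "pmap B ` proj_zeros d c = pmap B ` pmap A ` proj_zeros d c" using A(3) by simp
  also have "\<dots> = proj_zeros d c"
    using pmap_inverse[OF B(2) A(2)] zeros_sub[of d c] by (force simp: image_iff)
  finally have "pmap B \<in> carrier (lin_aut d c)" unfolding carrier_lin_aut using Binv by blast
  moreover have "pmap B \<otimes>\<^bsub>lin_aut d c\<^esub> x = \<one>\<^bsub>lin_aut d c\<^esub>"
    unfolding mult_lin_aut one_lin_aut A(1) pmap_comp[OF A(2)] B(2) pmap_id ..
  ultimately show "\<exists>y\<in>carrier (lin_aut d c). y \<otimes>\<^bsub>lin_aut d c\<^esub> x = \<one>\<^bsub>lin_aut d c\<^esub>" by blast
qed

lemma carrier_of_invariant:
  fixes A :: "5 \<Rightarrow> 5 \<Rightarrow> 'b::field"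
  assumes inv: "mat_invertible A" and hA: "\<And>p. hom_eval d c (matvec A p) = hom_eval d c p"
  shows "pmap A \<in> carrier (lin_aut d c)"
proof -
  obtain B where B: "matmul A B = matid" "matmul B A = matid" using inv unfolding mat_invertible_def by blast
  have "pmap A ` proj_zeros d c = proj_zeros d c"
  proof
    show "pmap A ` proj_zeros d c \<subseteq> proj_zeros d c"
    proof
      fix M assume "M \<in> pmap A ` proj_zeros d c"
      then obtain p where p: "\<exists>i. p i \<noteq> 0" "hom_eval d c p = 0" "M = pmap A (proj_point p)"
        unfolding proj_zeros_def by blast
      then have "M = proj_point (matvec A p)" by (simp add: pmap_pp)
      moreover have "\<exists>i. matvec A p i \<noteq> 0" by (rule inv_nonzero[OF B(2) p(1)])
      ultimately show "M \<in> proj_zeros d c" unfolding proj_zeros_def using p(2) hA by auto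
    qed
    show "proj_zeros d c \<subseteq> pmap A ` proj_zeros d c"
    proof
      fix M assume "M \<in> proj_zeros d c"
      then obtain q where q: "\<exists>i. q i \<noteq> 0" "hom_eval d c q = 0" "M = proj_point q"
        unfolding proj_zeros_def by blast
      have Bq: "\<exists>i. matvec B q i \<noteq> 0" by (rule inv_nonzero[OF B(1) q(1)])
      have AB: "matvec A (matvec B q) = q" using matvec_matmul[of A B q] B(1) by (simp add: matvec_matid)
      have "hom_eval d c (matvec B q) = 0" using hA[of "matvec B q"] AB q(2) by simp
      then have "proj_point (matvec B q) \<in> proj_zeros d c" unfolding proj_zeros_def using Bq by blast
      moreover have "pmap A (proj_point (matvec B q)) = M" using Bq AB q(3) by (simp add: pmap_pp)
      ultimately show "M \<in> pmap A ` proj_zeros d c" by blast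
    qed
  qed
  then show ?thesis unfolding carrier_lin_aut using inv by blast
qed

lemma fix5: "P 0 \<Longrightarrow> P 1 \<Longrightarrow> P 2 \<Longrightarrow> P 3 \<Longrightarrow> P 4 \<Longrightarrow> P (i::5)"
  using all5[of P] by blast

definition wt :: "5 \<Rightarrow> nat" where
  "wt k = (if k = 0 then 2 else if k = 1 then 3 else if k = 2 then 1 else if k = 3 then 0 else 4)"

definition pm :: "bool \<Rightarrow> 5 \<Rightarrow> 5" where "pm s = (if s then iota_perm else id)"

definition gm :: "'b::field \<Rightarrow> nat \<Rightarrow> bool \<Rightarrow> 5 \<Rightarrow> 5 \<Rightarrow> 'b" where
  "gm z i s = mono_mat (pm s) (\<lambda>k. z ^ (wt k * i))"

lemma wt_simps: "wt 0 = 2" "wt 1 = 3" "wt 2 = 1" "wt 3 = 0" "wt 4 = 4"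
  unfolding wt_def using distinct5 by auto

lemma iota_simps: "iota_perm 0 = 1" "iota_perm 1 = 0" "iota_perm 2 = 4" "iota_perm 3 = 3" "iota_perm 4 = 2"
  unfolding iota_perm_def using distinct5 by auto

lemma iota_invol: "iota_perm (iota_perm k) = k"
  by (rule fix5[of "\<lambda>k. iota_perm (iota_perm k) = k"]) (simp_all add: iota_simps)

lemma pm_invol: "pm s (pm s k) = k" unfolding pm_def by (simp add: iota_invol)

lemma pm_comp: "pm t \<circ> pm s = pm (s \<noteq> t)"
  unfolding pm_def by (auto simp: fun_eq_iff iota_invol)

lemma zpow_mod: "(z::'b::comm_ring_1)^5 = 1 \<Longrightarrow> z^n = z^(n mod 5)"
proof -
  assume z: "z^5 = 1"
  have "z^n = z^(5*(n div 5) + n mod 5)" by (simp only: mult_div_mod_eq)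
  also have "\<dots> = (z^5)^(n div 5) * z^(n mod 5)" by (simp only: power_add power_mult)
  finally show ?thesis using z by simp
qed

lemma zpow_cong: "(z::'b::comm_ring_1)^5 = 1 \<Longrightarrow> n mod 5 = m mod 5 \<Longrightarrow> z^n = z^m"
  using zpow_mod by metis

lemma wt_iota: "(wt k + wt (iota_perm k)) mod 5 = 0"
  by (rule fix5[of "\<lambda>k. (wt k + wt (iota_perm k)) mod 5 = 0"]) (simp_all add: iota_simps wt_simps)

definition dmul :: "nat \<times> bool \<Rightarrow> nat \<times> bool \<Rightarrow> nat \<times> bool" where
  "dmul = (\<lambda>(i, s) (j, t). (if s then (i + 5 - j) mod 5 else (i + j) mod 5, s \<noteq> t))"

lemma dihedral_mult: "x \<otimes>\<^bsub>dihedral 5\<^esub> y = dmul x y"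
  unfolding dihedral_def dmul_def by simp

lemma wt_iota_pow:
  assumes z: "(z::'b::comm_ring_1)^5 = 1" shows "z^(wt k) * z^(wt (iota_perm k)) = 1"
proof -
  have h: "z^2*z^3 = z^5" "z^3*z^2 = z^5" "z*z^4 = z^5" "z^4*z = z^5" by (simp_all add: eval_nat_numeral algebra_simps)
  show ?thesis
    by (rule fix5[of "\<lambda>k. z^(wt k) * z^(wt (iota_perm k)) = 1"]) (simp_all add: iota_simps wt_simps h z)
qed

lemma gm_entry:
  fixes z :: "'b::field"
  assumes z: "z^5 = 1" and j: "j < 5"
  shows "z ^ (wt k * i) * z ^ (wt (pm s k) * j) = z ^ (wt k * (if s then (i + 5 - j) mod 5 else (i + j) mod 5))"
proof -
  define a where "a = z ^ wt k"
  have a5: "a^5 = 1" unfolding a_def using z by (metis power_mult mult.commute power_one)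
  have a0: "a \<noteq> 0" using a5 by (metis zero_neq_one zero_power zero_less_numeral)
  have pw: "z ^ (wt k * n) = a ^ n" for n unfolding a_def by (simp add: power_mult)
  show ?thesis
  proof (cases s)
    case False
    have "z ^ (wt k * i) * z ^ (wt k * j) = a^(i+j)" by (simp add: pw power_add)
    also have "\<dots> = a^((i+j) mod 5)" by (rule zpow_mod[OF a5])
    finally show ?thesis using False by (simp add: pm_def pw)
  next
    case True
    define b where "b = z ^ wt (iota_perm k)"
    have ab: "a * b = 1" unfolding a_def b_def by (rule wt_iota_pow[OF z])
    have pwb: "z ^ (wt (iota_perm k) * n) = b ^ n" for n unfolding b_def by (simp add: power_mult)
    have "a^i * b^j * a^j = a^i * (a*b)^j" by (simp add: power_mult_distrib)
    also have "\<dots> = a^i" using ab by simp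
    also have "\<dots> = a^(i + 5 - j) * a^j"
    proof -
      have "(i + 5 - j) + j = i + 5" using j by simp
      then have "a^(i + 5 - j) * a^j = a^(i+5)" by (metis power_add)
      also have "\<dots> = a^i" using a5 by (simp add: power_add)
      finally show ?thesis by simp
    qed
    finally have "a^i * b^j = a^(i + 5 - j)" using a0 by simp
    also have "\<dots> = a^((i + 5 - j) mod 5)" by (rule zpow_mod[OF a5])
    finally show ?thesis using True by (simp add: pm_def pw pwb)
  qed
qed

lemma gm_mult:
  assumes z: "z^5 = 1" and j: "j < 5"
  shows "matmul (gm z i s) (gm z j t) = (case dmul (i, s) (j, t) of (m, r) \<Rightarrow> gm z m r)"
proof -
  have "matmul (gm z i s) (gm z j t) = mono_mat (pm (s \<noteq> t)) (\<lambda>k. z ^ (wt k * i) * z ^ (wt (pm s k) * j))"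
    unfolding gm_def matmul_mono pm_comp ..
  also have "\<dots> = mono_mat (pm (s \<noteq> t)) (\<lambda>k. z ^ (wt k * (if s then (i + 5 - j) mod 5 else (i + j) mod 5)))"
  proof (rule mono_mat_cong)
    fix k
    show "z ^ (wt k * i) * z ^ (wt (pm s k) * j) = z ^ (wt k * (if s then (i + 5 - j) mod 5 else (i + j) mod 5))"
      by (rule gm_entry[OF z j])
  qed simp
  finally show ?thesis unfolding dmul_def gm_def by simp
qed

lemma iso_rev:
  assumes h: "h \<in> hom D H" "bij_betw h (carrier D) (carrier H)"
    and cl: "\<And>x y. x \<in> carrier D \<Longrightarrow> y \<in> carrier D \<Longrightarrow> x \<otimes>\<^bsub>D\<^esub> y \<in> carrier D"
  shows "H \<cong> D"
proof -
  define k where "k = inv_into (carrier D) h"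
  have kb: "bij_betw k (carrier H) (carrier D)" unfolding k_def using h(2) by (rule bij_betw_inv_into)
  have kin: "k x \<in> carrier D" if "x \<in> carrier H" for x using kb that by (meson bij_betwE)
  have inj: "inj_on h (carrier D)" using h(2) by (simp add: bij_betw_def)
  have hk: "h (k x) = x" if "x \<in> carrier H" for x
    unfolding k_def using h(2) that by (simp add: bij_betw_inv_into_right)
  have "k \<in> hom H D"
    unfolding hom_def
  proof (safe)
    fix x assume "x \<in> carrier H" then show "k x \<in> carrier D" by (rule kin)
  next
    fix x y assume x: "x \<in> carrier H" and y: "y \<in> carrier H"
    show "k (x \<otimes>\<^bsub>H\<^esub> y) = k x \<otimes>\<^bsub>D\<^esub> k y"
      unfolding k_def
    proof (rule inv_into_f_eq[OF inj])
      show "inv_into (carrier D) h x \<otimes>\<^bsub>D\<^esub> inv_into (carrier D) h y \<in> carrier D"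
        using cl kin[OF x] kin[OF y] unfolding k_def by blast
      have "h (k x \<otimes>\<^bsub>D\<^esub> k y) = h (k x) \<otimes>\<^bsub>H\<^esub> h (k y)"
        using h(1) kin[OF x] kin[OF y] unfolding hom_def by blast
      then show "h (inv_into (carrier D) h x \<otimes>\<^bsub>D\<^esub> inv_into (carrier D) h y) = x \<otimes>\<^bsub>H\<^esub> y"
        using hk[OF x] hk[OF y] unfolding k_def by simp
    qed
  qed
  then have "k \<in> iso H D" using kb by (rule isoI)
  then show ?thesis by (rule is_isoI)
qed

lemma fab_alpha: "(z::'b::comm_ring_1)^5 = 1 \<Longrightarrow> fab a b (z^2*u) (z^3*v) (z*x) y (z^4*w) = fab a b u v x y w"
proof -
  assume z: "z^5 = 1"
  have "z^10 = (z^5)^2" by (simp flip: power_mult)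
  then have z10: "z^10 = 1" using z by simp
  have "fab a b (z^2*u) (z^3*v) (z*x) y (z^4*w) = z^5*(x*u^2 + 2*y*u*v + 2*x^2*v + b*x*y*w) + z^10*(w*v^2 + 2*w^2*u) + a*y^3"
    unfolding fab_def by (simp add: algebra_simps eval_nat_numeral)
  also have "\<dots> = fab a b u v x y w" unfolding fab_def z z10 by (simp add: algebra_simps)
  finally show ?thesis .
qed

lemma fab_iota: "fab a b v u w y x = fab a b u v x y w"
  unfolding fab_def by (simp add: algebra_simps)

lemma zinj:
  fixes z :: "'b::field"
  assumes z5: "z^5 = 1" and prim: "\<forall>j::nat. 0 < j \<and> j < 5 \<longrightarrow> z^j \<noteq> 1"
    and "i < 5" "j < 5" "z^i = z^j"
  shows "i = j"
proof -
  have z0: "z \<noteq> 0" using z5 by (metis zero_neq_one zero_power zero_less_numeral)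
  have lt: False if "m < n" "n < 5" "z^m = z^n" for m n
  proof -
    have e0: "z^m * z^(n-m) = z^n" using that(1) by (simp flip: power_add)
    have e: "z^m * z^(n-m) = z^m * 1" using e0 that(3) by (metis mult.right_neutral)
    have "z^m \<noteq> 0" using z0 by simp
    then have "z^(n-m) = 1" using e mult_left_cancel by blast
    then show False using prim that(1,2) by simp
  qed
  show ?thesis using lt[of i j] lt[of j i] assms(3-5) by (metis linorder_neqE_nat)
qed

lemma pp_test:
  fixes M N :: "5 \<Rightarrow> 5 \<Rightarrow> 'b::field"
  assumes "pmap M = pmap N" "\<exists>i. e i \<noteq> 0"
  shows "\<exists>c. c \<noteq> 0 \<and> matvec M e = (\<lambda>k. c * matvec N e k)"
proof -
  have "proj_point (matvec M e) = proj_point (matvec N e)"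
    using assms pmap_pp[OF assms(2), of M] pmap_pp[OF assms(2), of N] by simp
  then show ?thesis by (rule pp_eq)
qed

lemma gm_inj:
  fixes z :: "'b::field"
  assumes z5: "z^5 = 1" and prim: "\<forall>j::nat. 0 < j \<and> j < 5 \<longrightarrow> z^j \<noteq> 1"
    and ij: "i < 5" "j < 5" and eq: "pmap (gm z i s) = pmap (gm z j t)"
  shows "i = j \<and> s = t"
proof -
  have z0: "z \<noteq> 0" using z5 by (metis zero_neq_one zero_power zero_less_numeral)
  have mv: "matvec (gm z i s) e = (\<lambda>k. z^(wt k * i) * e (pm s k))" for i s e
    unfolding gm_def matvec_mono ..
  have ne0: "\<exists>k. ee 0 k \<noteq> (0::'b)" using ee_simps(1) by (metis zero_neq_one)
  obtain c where c: "c \<noteq> 0" "\<And>k. z^(wt k * i) * ee 0 (pm s k) = c * (z^(wt k * j) * ee 0 (pm t k))"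
    using pp_test[OF eq ne0] unfolding mv by (auto simp: fun_eq_iff)
  have st: "s = t"
  proof (rule ccontr)
    assume "s \<noteq> t"
    then consider "s" "\<not> t" | "\<not> s" "t" by blast
    then show False
    proof cases
      case 1 then show False using c(2)[of 1] z0 by (simp add: pm_def iota_simps ee_simps wt_simps)
    next
      case 2 then show False using c(2)[of 0] z0 by (simp add: pm_def iota_simps ee_simps wt_simps)
    qed
  qed
  define e23 :: "5 \<Rightarrow> 'b" where "e23 = (\<lambda>k. if k = 2 \<or> k = 3 then 1 else 0)"
  have e23v: "e23 0 = 0" "e23 1 = 0" "e23 2 = 1" "e23 3 = 1" "e23 4 = 0" unfolding e23_def using distinct5 by auto
  have ne23: "\<exists>k. e23 k \<noteq> 0" using e23v(3) by (metis zero_neq_one)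
  obtain d where d: "d \<noteq> 0" "\<And>k. z^(wt k * i) * e23 (pm s k) = d * (z^(wt k * j) * e23 (pm t k))"
    using pp_test[OF eq ne23] unfolding mv by (auto simp: fun_eq_iff)
  have d1: "d = 1" using d(2)[of 3] st by (cases t) (simp_all add: pm_def iota_simps e23v wt_simps)
  have "z^i = z^j"
  proof (cases t)
    case False then show ?thesis using d(2)[of 2] st d1 by (simp add: pm_def e23v wt_simps)
  next
    case True
    then have h: "(z^i)^4 = (z^j)^4" using d(2)[of 4] st d1 by (simp add: pm_def iota_simps e23v wt_simps power_mult mult.commute)
    have q: "\<And>w::'b. w^4 * w = w^5" by (simp add: eval_nat_numeral algebra_simps)
    have "(z^i)^5 = 1" "(z^j)^5 = 1" using z5 by (metis power_mult mult.commute power_one)+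
    then have pi: "(z^i)^4 * z^i = 1" and pj: "(z^j)^4 * z^j = 1" using q by simp_all
    have "z^j = ((z^i)^4 * z^i) * z^j" using pi by simp
    also have "\<dots> = ((z^j)^4 * z^j) * z^i" using h by (simp add: mult_ac)
    also have "\<dots> = z^i" using pj by simp
    finally show ?thesis by simp
  qed
  then show ?thesis using zinj[OF z5 prim ij] st by simp
qed

lemma dvd5: "(d::nat) dvd 5 \<Longrightarrow> d = 1 \<or> d = 5"
proof -
  assume h: "d dvd 5"
  have "d \<noteq> 0" using h by (rule contrapos_pn) simp
  moreover have "d \<le> 5" using h by (simp add: dvd_imp_le)
  ultimately have "d = 1 \<or> d = 2 \<or> d = 3 \<or> d = 4 \<or> d = 5" by arith
  then show ?thesis using h by auto
qed

lemma dvd2: "(d::nat) dvd 2 \<Longrightarrow> d = 1 \<or> d = 2"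
proof -
  assume h: "d dvd 2"
  have "d \<noteq> 0" using h by (rule contrapos_pn) simp
  moreover have "d \<le> 2" using h by (simp add: dvd_imp_le)
  ultimately show ?thesis by arith
qed

lemma D5:
  fixes z a b :: "'b::field"
  assumes z5: "z^5 = 1" and prim: "\<forall>j::nat. 0 < j \<and> j < 5 \<longrightarrow> z^j \<noteq> 1"
  shows "let G = lin_aut 3 (Fab_coeffs a b); \<alpha> = pmap (alpha_mat z); \<iota> = pmap (iota_mat :: 5 \<Rightarrow> 5 \<Rightarrow> 'b)
     in group G \<and> \<alpha> \<in> carrier G \<and> \<iota> \<in> carrier G \<and> group.ord G \<alpha> = 5 \<and> group.ord G \<iota> = 2 \<and>
        card (generate G {\<alpha>, \<iota>}) = 10 \<and> G\<lparr>carrier := generate G {\<alpha>, \<iota>}\<rparr> \<cong> dihedral 5"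
proof -
  define G where "G = lin_aut 3 (Fab_coeffs a b)"
  interpret group G unfolding G_def by (rule lin_aut_group)
  have z0: "z \<noteq> 0" using z5 by (metis zero_neq_one zero_power zero_less_numeral)
  define g :: "nat \<times> bool \<Rightarrow> (5 \<Rightarrow> 'b) set \<Rightarrow> (5 \<Rightarrow> 'b) set" where "g = (\<lambda>(i, s). pmap (gm z i s))"
  have dv: "z^(wt i) = (if i = 0 then z^2 else if i = 1 then z^3 else if i = 2 then z else if i = 3 then 1 else z^4)" for i :: 5
    by (rule fix5[of "\<lambda>i. z^(wt i) = (if i = 0 then z^2 else if i = 1 then z^3 else if i = 2 then z else if i = 3 then 1 else z^4)"])
       (simp_all add: wt_simps distinct5)
  have alpha: "alpha_mat z = gm z 1 False"
    unfolding alpha_mat_def gm_def mono_mat_def pm_def by (simp add: fun_eq_iff dv)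
  have iota: "(iota_mat :: 5 \<Rightarrow> 5 \<Rightarrow> 'b) = gm z 0 True"
    unfolding iota_mat_def gm_def mono_mat_def pm_def by (auto simp: fun_eq_iff)
  have gm_inv: "mat_invertible (gm z i s)" for i s
    unfolding gm_def by (rule mono_invertible[where \<tau>="pm s"]) (simp_all add: pm_invol z0)
  have gmul: "g (i, s) \<otimes>\<^bsub>G\<^esub> g (j, t) = g (dmul (i, s) (j, t))" if "j < 5" for i s j t
  proof -
    obtain m r where mr: "dmul (i, s) (j, t) = (m, r)" by (cases "dmul (i, s) (j, t)")
    have "g (i, s) \<otimes>\<^bsub>G\<^esub> g (j, t) = pmap (matmul (gm z i s) (gm z j t))"
      unfolding G_def mult_lin_aut g_def by (simp add: pmap_comp[OF gm_inv])
    also have "\<dots> = g (m, r)" unfolding gm_mult[OF z5 that] mr g_def by simp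
    finally show ?thesis using mr by simp
  qed
  have one: "\<one>\<^bsub>G\<^esub> = g (0, False)"
  proof -
    have "gm z 0 False = matid" unfolding gm_def matid_mono by (rule mono_mat_cong) (simp_all add: pm_def)
    then show ?thesis unfolding G_def one_lin_aut g_def by (simp add: pmap_id)
  qed
  have aC: "g (1, False) \<in> carrier G"
    unfolding g_def G_def
  proof (simp, rule carrier_of_invariant[OF gm_inv])
    fix p :: "5 \<Rightarrow> 'b"
    show "hom_eval 3 (Fab_coeffs a b) (matvec (gm z (Suc 0) False) p) = hom_eval 3 (Fab_coeffs a b) p"
      unfolding gm_def matvec_mono hom_Fab by (simp add: pm_def wt_simps fab_alpha[OF z5])
  qed
  have iC: "g (0, True) \<in> carrier G"
    unfolding g_def G_def
  proof (simp, rule carrier_of_invariant[OF gm_inv])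
    fix p :: "5 \<Rightarrow> 'b"
    show "hom_eval 3 (Fab_coeffs a b) (matvec (gm z 0 True) p) = hom_eval 3 (Fab_coeffs a b) p"
      unfolding gm_def matvec_mono hom_Fab by (simp add: pm_def iota_simps fab_iota)
  qed
  have pow: "g (1, False) [^]\<^bsub>G\<^esub> n = g (n mod 5, False)" for n
  proof (induction n)
    case 0 then show ?case by (simp add: one)
  next
    case (Suc n)
    have "g (1, False) [^]\<^bsub>G\<^esub> Suc n = g (n mod 5, False) \<otimes>\<^bsub>G\<^esub> g (1, False)" using Suc by simp
    also have "\<dots> = g (Suc n mod 5, False)" by (simp add: gmul dmul_def mod_Suc_eq)
    finally show ?case .
  qed
  have gT: "g (i, True) = g (i, False) \<otimes>\<^bsub>G\<^esub> g (0, True)" if "i < 5" for i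
    using that by (simp add: gmul dmul_def)
  have gC: "g (i, s) \<in> carrier G" if "i < 5" for i s
  proof -
    have F: "g (i, False) \<in> carrier G" using pow[of i] that nat_pow_closed[OF aC, of i] by simp
    show ?thesis
    proof (cases s)
      case True then show ?thesis using gT[OF that] F iC by simp
    next
      case False then show ?thesis using F by simp
    qed
  qed
  define S where "S = g ` ({0..<5} \<times> UNIV)"
  have inj: "inj_on g ({0..<5} \<times> UNIV)"
  proof (rule inj_onI)
    fix x y assume x: "x \<in> {0..<5} \<times> (UNIV :: bool set)" and y: "y \<in> {0..<5} \<times> (UNIV :: bool set)" and e: "g x = g y"
    obtain i s where xi: "x = (i, s)" by (cases x)
    obtain j t where yj: "y = (j, t)" by (cases y)
    show "x = y" using gm_inj[OF z5 prim, of i j s t] x y e unfolding xi yj g_def by simp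
  qed
  have cardS: "card S = 10" unfolding S_def by (simp add: card_image[OF inj] card_cartesian_product)
  have SC: "S \<subseteq> carrier G" unfolding S_def using gC by auto
  have subS: "subgroup S G"
  proof (rule subgroupI[OF SC])
    show "S \<noteq> {}" unfolding S_def by auto
  next
    fix x assume "x \<in> S"
    then obtain i s where isx: "i < 5" "x = g (i, s)" unfolding S_def by auto
    define i' where "i' = (if s then i else (5 - i) mod 5)"
    have i'5: "i' < 5" unfolding i'_def using isx(1) by simp
    have "g (i', s) \<otimes>\<^bsub>G\<^esub> x = g (dmul (i', s) (i, s))" unfolding isx(2) by (rule gmul[OF isx(1)])
    also have "dmul (i', s) (i, s) = (0, False)"
    proof (cases s)
      case True then show ?thesis unfolding dmul_def i'_def by simp
    next
      case False
      have "((5 - i) mod 5 + i) mod 5 = 0"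
      proof (cases "i = 0")
        case True then show ?thesis by simp
      next
        case False then have "(5 - i) mod 5 = 5 - i" using isx(1) by simp
        then show ?thesis using isx(1) by simp
      qed
      then show ?thesis using False unfolding dmul_def i'_def by simp
    qed
    finally have "g (i', s) \<otimes>\<^bsub>G\<^esub> x = \<one>\<^bsub>G\<^esub>" using one by simp
    then have "inv\<^bsub>G\<^esub> x = g (i', s)" using inv_equality gC[OF i'5] gC[OF isx(1)] isx(2) by blast
    then show "inv\<^bsub>G\<^esub> x \<in> S" unfolding S_def using i'5 by auto
  next
    fix x y assume "x \<in> S" "y \<in> S"
    then obtain i s j t where ij: "j < 5" "x = g (i, s)" "y = g (j, t)" unfolding S_def by auto
    have "x \<otimes>\<^bsub>G\<^esub> y = g (dmul (i, s) (j, t))" unfolding ij(2,3) by (rule gmul[OF ij(1)])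
    moreover obtain m r where mr: "dmul (i, s) (j, t) = (m, r)" by (cases "dmul (i, s) (j, t)")
    moreover have "m < 5"
    proof -
      have "m = (if s then (i + 5 - j) mod 5 else (i + j) mod 5)" using mr unfolding dmul_def by simp
      then show ?thesis by simp
    qed
    ultimately show "x \<otimes>\<^bsub>G\<^esub> y \<in> S" unfolding S_def by (simp add: image_iff) (metis atLeastLessThan_iff le0 mem_Sigma_iff UNIV_I)
  qed
  have gen: "generate G {g (1, False), g (0, True)} = S"
  proof
    show "generate G {g (1, False), g (0, True)} \<subseteq> S"
      by (rule generate_subgroup_incl[OF _ subS]) (auto simp: S_def)
    show "S \<subseteq> generate G {g (1, False), g (0, True)}"
    proof
      fix x assume "x \<in> S"
      then obtain i s where isx: "i < 5" "x = g (i, s)" unfolding S_def by auto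
      have pw: "g (1, False) [^]\<^bsub>G\<^esub> n \<in> generate G {g (1, False), g (0, True)}" for n :: nat
      proof (induction n)
        case 0 then show ?case by (simp add: generate.one)
      next
        case (Suc n) then show ?case by (simp add: generate.eng generate.incl)
      qed
      have F: "g (i, False) \<in> generate G {g (1, False), g (0, True)}" using pw[of i] pow[of i] isx(1) by simp
      show "x \<in> generate G {g (1, False), g (0, True)}"
      proof (cases s)
        case True then show ?thesis using isx gT[OF isx(1)] F by (simp add: generate.eng generate.incl)
      next
        case False then show ?thesis using isx F by simp
      qed
    qed
  qed
  have ne: "g (1, False) \<noteq> \<one>\<^bsub>G\<^esub>" "g (0, True) \<noteq> \<one>\<^bsub>G\<^esub>"
    using inj one unfolding inj_on_def by fastforce+
  have ordA: "ord (g (1, False)) = 5"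
  proof -
    have "g (1, False) [^]\<^bsub>G\<^esub> (5::nat) = \<one>\<^bsub>G\<^esub>" using pow[of 5] one by simp
    then have "ord (g (1, False)) dvd 5" using pow_eq_id[OF aC] by blast
    moreover have "ord (g (1, False)) \<noteq> 1" using ord_eq_1[OF aC] ne(1) by blast
    ultimately show ?thesis using dvd5 by blast
  qed
  have ordI: "ord (g (0, True)) = 2"
  proof -
    have "g (0, True) [^]\<^bsub>G\<^esub> (2::nat) = g (0, True) \<otimes>\<^bsub>G\<^esub> g (0, True)"
      using iC by (simp add: numeral_2_eq_2)
    also have "\<dots> = \<one>\<^bsub>G\<^esub>" using one by (simp add: gmul dmul_def)
    finally have "ord (g (0, True)) dvd 2" using pow_eq_id[OF iC] by blast
    moreover have "ord (g (0, True)) \<noteq> 1" using ord_eq_1[OF iC] ne(2) by blast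
    ultimately show ?thesis using dvd2 by blast
  qed
  have iso: "G\<lparr>carrier := S\<rparr> \<cong> dihedral 5"
  proof (rule iso_rev[where h = g])
    show "g \<in> hom (dihedral 5) (G\<lparr>carrier := S\<rparr>)"
      unfolding hom_def
    proof (safe)
      fix x assume "x \<in> carrier (dihedral 5)"
      then show "g x \<in> carrier (G\<lparr>carrier := S\<rparr>)" unfolding S_def dihedral_def by auto
    next
      fix x y assume x: "x \<in> carrier (dihedral 5)" and y: "y \<in> carrier (dihedral 5)"
      obtain i s where xi: "x = (i, s)" by (cases x)
      obtain j t where yj: "y = (j, t)" by (cases y)
      have "j < 5" using y unfolding yj dihedral_def by simp
      then show "g (x \<otimes>\<^bsub>dihedral 5\<^esub> y) = g x \<otimes>\<^bsub>G\<lparr>carrier := S\<rparr>\<^esub> g y"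
        unfolding dihedral_mult xi yj by (simp add: gmul)
    qed
    show "bij_betw g (carrier (dihedral 5)) (carrier (G\<lparr>carrier := S\<rparr>))"
      unfolding bij_betw_def using inj by (simp add: S_def dihedral_def)
    fix x y assume "x \<in> carrier (dihedral 5)" "y \<in> carrier (dihedral 5)"
    obtain i s where xi: "x = (i, s)" by (cases x)
    obtain j t where yj: "y = (j, t)" by (cases y)
    have "(if s then (i + 5 - j) mod 5 else (i + j) mod 5) < 5" by simp
    then show "x \<otimes>\<^bsub>dihedral 5\<^esub> y \<in> carrier (dihedral 5)" unfolding dihedral_mult xi yj dmul_def by (simp add: dihedral_def)
  qed
  have eqs: "pmap (alpha_mat z) = g (1, False)" "pmap (iota_mat :: 5 \<Rightarrow> 5 \<Rightarrow> 'b) = g (0, True)"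
    unfolding g_def alpha iota by simp_all
  show ?thesis
    unfolding Let_def G_def[symmetric] eqs gen
    using aC iC ordA ordI cardS iso is_group by simp
qed

theorem lemma1p2:
  fixes \<zeta> a1 a2 a3 a4 a5 a6 a7 :: "'a::field_char_0"
  assumes zeta: "\<zeta> ^ 5 = 1" "\<forall>j::nat. 0 < j \<and> j < 5 \<longrightarrow> \<zeta> ^ j \<noteq> 1"
    and smooth: "smooth_hypersurface 3
          (F_coeffs (to_ac a1) (to_ac a2) (to_ac a3) (to_ac a4) (to_ac a5) (to_ac a6) (to_ac a7))"
    and a23: "a2 \<noteq> 0 \<or> a3 \<noteq> 0"
  shows "(\<exists>(A :: 5 \<Rightarrow> 5 \<Rightarrow> 'a alg_closure) a b. mat_invertible A \<and>
            (\<forall>p. hom_eval 3 (F_coeffs (to_ac a1) (to_ac a2) (to_ac a3) (to_ac a4) (to_ac a5)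
                   (to_ac a6) (to_ac a7)) (matvec A p) = 0
                 \<longleftrightarrow> hom_eval 3 (Fab_coeffs a b) p = 0))
       \<and> (\<forall>a b :: 'a alg_closure. smooth_hypersurface 3 (Fab_coeffs a b) \<longleftrightarrow> D_ab a b \<noteq> 0)
       \<and> (\<forall>a b :: 'a alg_closure.
            (let G = lin_aut 3 (Fab_coeffs a b);
                 \<alpha> = pmap (alpha_mat (to_ac \<zeta>));
                 \<iota> = pmap (iota_mat :: 5 \<Rightarrow> 5 \<Rightarrow> 'a alg_closure)
             in group G \<and> \<alpha> \<in> carrier G \<and> \<iota> \<in> carrier G \<and>
                group.ord G \<alpha> = 5 \<and> group.ord G \<iota> = 2 \<and>
                card (generate G {\<alpha>, \<iota>}) = 10 \<and>
                G\<lparr>carrier := generate G {\<alpha>, \<iota>}\<rparr> \<cong> dihedral 5))"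
proof -
  have a23': "to_ac a2 \<noteq> 0 \<or> to_ac a3 \<noteq> 0" using a23 by simp
  have A: "\<exists>(A :: 5 \<Rightarrow> 5 \<Rightarrow> 'a alg_closure) a b. mat_invertible A \<and>
            (\<forall>p. hom_eval 3 (F_coeffs (to_ac a1) (to_ac a2) (to_ac a3) (to_ac a4) (to_ac a5)
                   (to_ac a6) (to_ac a7)) (matvec A p) = 0
                 \<longleftrightarrow> hom_eval 3 (Fab_coeffs a b) p = 0)"
    by (rule partA[OF smooth a23'])
  have B: "\<forall>a b :: 'a alg_closure. smooth_hypersurface 3 (Fab_coeffs a b) \<longleftrightarrow> D_ab a b \<noteq> 0"
    using smooth_Fab_iff by blast
  have z5: "(to_ac \<zeta>)^5 = 1" using zeta(1) by (metis to_ac_power to_ac_1)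
  have zp: "\<forall>j::nat. 0 < j \<and> j < 5 \<longrightarrow> (to_ac \<zeta>)^j \<noteq> 1"
    using zeta(2) by (metis to_ac_power to_ac_eq_1_iff)
  have C: "\<forall>a b :: 'a alg_closure.
            (let G = lin_aut 3 (Fab_coeffs a b);
                 \<alpha> = pmap (alpha_mat (to_ac \<zeta>));
                 \<iota> = pmap (iota_mat :: 5 \<Rightarrow> 5 \<Rightarrow> 'a alg_closure)
             in group G \<and> \<alpha> \<in> carrier G \<and> \<iota> \<in> carrier G \<and>
                group.ord G \<alpha> = 5 \<and> group.ord G \<iota> = 2 \<and>
                card (generate G {\<alpha>, \<iota>}) = 10 \<and>
                G\<lparr>carrier := generate G {\<alpha>, \<iota>}\<rparr> \<cong> dihedral 5)"
    using D5[OF z5 zp] by blast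
  show ?thesis using A B C by blast
qed

end
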